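(* Let $\Omega$ be a nonempty set, $\succeq$ a regular stochastic order on $\mathfrak F(\Omega)$ and $\Gamma\subset\mathfrak F(\Omega)$ a convex cone. There is no $f\in\Gamma$ with $f\succeq1$ if and only if there exists $m\in\mathbb P_\succeq=\{\mu\in\mathbb P:\mu(N)=0\text{ whenever }0\succeq1_N\}$ such that $$\Gamma_\succeq=\{f\in\Gamma:f\succeq a\text{ for some }a\in\mathbb R\}\subset L^1(m)\quad\text{and}\quad\sup_{f\in\Gamma_\succeq}\int f\,dm\le0 .$$
   Context: $\mathfrak F(\Omega)$ is the set of real-valued functions on $\Omega$; inequalities are pointwise and constants are constant functions. A regular stochastic order is a reflexive, transitive binary relation $\succeq$ on $\mathfrak F(\Omega)$ such that: (TRIV) $0\not\succeq1$; (CONE) $f_i\succeq g_i$ and $a_i\ge0$ ($i=1,2$) imply $a_1f_1+a_2f_2\succeq a_1g_1+a_2g_2$; (CERT) $f\ge0$ implies $f\succeq0$; (APPR) $f+2^{-n}\succeq0$ for all $n$ implies $f\succeq0$; (REST) $f\succeq0$, $A\subset\Omega$ imply $f1_A\succeq0$. $\mathbb P$ is the set of finitely additive probabilities on all subsets of $\Omega$. For $\mu$ bounded finitely additive, $\int f\,d\mu:=\lim_n\int[(f^+\wedge n)-(f^-\wedge n)]d\mu$ if the limit exists in $[-\infty,\infty]$, else $\infty$; $L^1(m)$ denotes the $m$-integrable functions (Dunford–Schwartz). *)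

theory Defs
  imports Complex_Main "HOL-Library.Extended_Real" "HOL-Library.Indicator_Function"
begin

text \<open>The ground set Omega is the (nonempty) type 'a; F(Omega) is 'a => real.\<close>

definition regular_stochastic_order :: "(('a \<Rightarrow> real) \<Rightarrow> ('a \<Rightarrow> real) \<Rightarrow> bool) \<Rightarrow> bool" where
  "regular_stochastic_order R \<longleftrightarrow>
     (\<forall>f. R f f) \<and>
     (\<forall>f g h. R f g \<longrightarrow> R g h \<longrightarrow> R f h) \<and>
     \<not> R (\<lambda>_. 0) (\<lambda>_. 1) \<and>
     (\<forall>f1 f2 g1 g2 a1 a2. R f1 g1 \<longrightarrow> R f2 g2 \<longrightarrow> a1 \<ge> 0 \<longrightarrow> a2 \<ge> 0 \<longrightarrow>
        R (\<lambda>x. a1 * f1 x + a2 * f2 x) (\<lambda>x. a1 * g1 x + a2 * g2 x)) \<and>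
     (\<forall>f. (\<forall>x. f x \<ge> 0) \<longrightarrow> R f (\<lambda>_. 0)) \<and>
     (\<forall>f. (\<forall>n::nat. R (\<lambda>x. f x + (1/2)^n) (\<lambda>_. 0)) \<longrightarrow> R f (\<lambda>_. 0)) \<and>
     (\<forall>f A. R f (\<lambda>_. 0) \<longrightarrow> R (\<lambda>x. f x * indicator A x) (\<lambda>_. 0))"

definition convex_cone_fun :: "('a \<Rightarrow> real) set \<Rightarrow> bool" where
  "convex_cone_fun \<Gamma> \<longleftrightarrow>
     (\<forall>f\<in>\<Gamma>. \<forall>g\<in>\<Gamma>. \<forall>a b::real. a \<ge> 0 \<longrightarrow> b \<ge> 0 \<longrightarrow> (\<lambda>x. a * f x + b * g x) \<in> \<Gamma>)"

definition fa_prob :: "('a set \<Rightarrow> real) \<Rightarrow> bool" where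
  "fa_prob m \<longleftrightarrow> m UNIV = 1 \<and> (\<forall>A. m A \<ge> 0) \<and>
     (\<forall>A B. A \<inter> B = {} \<longrightarrow> m (A \<union> B) = m A + m B)"

definition simple_int :: "('a set \<Rightarrow> real) \<Rightarrow> ('a \<Rightarrow> real) \<Rightarrow> real" where
  "simple_int m s = (\<Sum>y\<in>range s. y * m (s -` {y}))"

text \<open>Dunford--Schwartz integrability (all subsets are measurable, m is nonnegative):
  a sequence of simple functions converging to f in m-measure and Cauchy in mean.\<close>
definition ds_has_integral :: "('a set \<Rightarrow> real) \<Rightarrow> ('a \<Rightarrow> real) \<Rightarrow> real \<Rightarrow> bool" where
  "ds_has_integral m f I \<longleftrightarrow>
     (\<exists>s :: nat \<Rightarrow> 'a \<Rightarrow> real.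
        (\<forall>n. finite (range (s n))) \<and>
        (\<forall>\<epsilon>>0. (\<lambda>n. m {x. \<bar>s n x - f x\<bar> > \<epsilon>}) \<longlonglongrightarrow> 0) \<and>
        (\<forall>\<epsilon>>0. \<exists>N. \<forall>n\<ge>N. \<forall>k\<ge>N. simple_int m (\<lambda>x. \<bar>s n x - s k x\<bar>) < \<epsilon>) \<and>
        (\<lambda>n. simple_int m (s n)) \<longlonglongrightarrow> I)"

definition ds_integrable :: "('a set \<Rightarrow> real) \<Rightarrow> ('a \<Rightarrow> real) \<Rightarrow> bool" where
  "ds_integrable m f \<longleftrightarrow> (\<exists>I. ds_has_integral m f I)"

definition ds_integral :: "('a set \<Rightarrow> real) \<Rightarrow> ('a \<Rightarrow> real) \<Rightarrow> real" where
  "ds_integral m f = (THE I. ds_has_integral m f I)"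

text \<open>The extended integral of the paper via truncations.\<close>
definition trunc_int :: "('a set \<Rightarrow> real) \<Rightarrow> ('a \<Rightarrow> real) \<Rightarrow> ereal" where
  "trunc_int m f =
     (let g = (\<lambda>n::nat. ereal (ds_integral m
                 (\<lambda>x. min (max (f x) 0) (real n) - min (max (- f x) 0) (real n))))
      in if (\<exists>L. g \<longlonglongrightarrow> L) then lim g else \<infinity>)"

definition P_order :: "(('a \<Rightarrow> real) \<Rightarrow> ('a \<Rightarrow> real) \<Rightarrow> bool) \<Rightarrow> ('a set \<Rightarrow> real) set" where
  "P_order R = {m. fa_prob m \<and> (\<forall>N. R (\<lambda>_. 0) (indicator N) \<longrightarrow> m N = 0)}"

definition Gamma_order :: "(('a \<Rightarrow> real) \<Rightarrow> ('a \<Rightarrow> real) \<Rightarrow> bool) \<Rightarrow> ('a \<Rightarrow> real) set \<Rightarrow> ('a \<Rightarrow> real) set" where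
  "Gamma_order R \<Gamma> = {f\<in>\<Gamma>. \<exists>a::real. R f (\<lambda>_. a)}"

end

theory Submission
  imports Defs
begin

lemma finite_range_pair: "finite (range s) \<Longrightarrow> finite (range t) \<Longrightarrow> finite (range (\<lambda>x. (s x, t x)))"
  by (rule finite_subset[of _ "range s \<times> range t"]) auto


lemma finite_range_comb: "finite (range s) \<Longrightarrow> finite (range t) \<Longrightarrow> finite (range (\<lambda>x. F (s x) (t x)))"
proof -
  assume a: "finite (range s)" "finite (range t)"
  have "range (\<lambda>x. F (s x) (t x)) = (\<lambda>(a,b). F a b) ` range (\<lambda>x. (s x, t x))" by auto
  thus ?thesis using finite_range_pair[OF a] by simp
qed


lemma finite_range_comp: "finite (range s) \<Longrightarrow> finite (range (\<lambda>x. F (s x)))"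
proof -
  assume a: "finite (range s)"
  have "range (\<lambda>x. F (s x)) = F ` range s" by auto
  thus ?thesis using a by simp
qed


lemma finite_range_const: "finite (range (\<lambda>_::'a. c::real))"
  by (rule finite_subset[of _ "{c}"]) auto


lemma finite_range_indicator: "finite (range (indicator A :: 'a \<Rightarrow> real))"
  by (rule finite_subset[of _ "{0,1}"]) (auto simp: indicator_def)


lemma finite_range_bound: "finite (range (s::'a \<Rightarrow> real)) \<Longrightarrow> \<exists>C\<ge>0. \<forall>x. \<bar>s x\<bar> \<le> C"
proof -
  assume f: "finite (range s)"
  have "\<forall>x. \<bar>s x\<bar> \<le> (\<Sum>v\<in>range s. \<bar>v\<bar>)"
    using member_le_sum[of _ "range s" abs] f by auto
  moreover have "(\<Sum>v\<in>range s. \<bar>v\<bar>) \<ge> 0" by (simp add: sum_nonneg)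
  ultimately show ?thesis by blast
qed


section \<open>Finitely additive probabilities\<close>

context
  fixes m :: "'a set \<Rightarrow> real"
  assumes fa: "fa_prob m"
begin

lemma fa_nonneg: "m A \<ge> 0" using fa unfolding fa_prob_def by blast
lemma fa_add: "A \<inter> B = {} \<Longrightarrow> m (A \<union> B) = m A + m B" using fa unfolding fa_prob_def by blast
lemma fa_univ: "m UNIV = 1" using fa unfolding fa_prob_def by blast
lemma fa_empty: "m {} = 0" using fa_add[of "{}" "{}"] by simp
lemma fa_mono: assumes "A \<subseteq> B" shows "m A \<le> m B"
proof -
  have "B = A \<union> (B - A)" using assms by blast
  hence "m B = m A + m (B - A)" using fa_add[of A "B - A"] by (metis Diff_disjoint)
  thus ?thesis using fa_nonneg[of "B - A"] by linarith
qed
lemma fa_subadd: "m (A \<union> B) \<le> m A + m B"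
proof -
  have "A \<union> B = A \<union> (B - A)" by blast
  hence "m (A \<union> B) = m A + m (B - A)" using fa_add[of A "B - A"] by (metis Diff_disjoint)
  thus ?thesis using fa_mono[of "B - A" B] by auto
qed

lemma fa_finite_union:
  assumes "finite I" "disjoint_family_on A I"
  shows "m (\<Union>i\<in>I. A i) = (\<Sum>i\<in>I. m (A i))"
  using assms
proof (induction I rule: finite_induct)
  case empty then show ?case by (simp add: fa_empty)
next
  case (insert i I)
  have d: "disjoint_family_on A I" using insert.prems by (auto simp: disjoint_family_on_def)
  have "A i \<inter> (\<Union>j\<in>I. A j) = {}" using insert.prems insert.hyps(2)
    by (auto simp: disjoint_family_on_def)
  then show ?case using insert.IH[OF d] insert.hyps fa_add by simp
qed

lemma simple_int_comp:
  assumes fin: "finite (range u)"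
  shows "simple_int m (\<lambda>x. G (u x)) = (\<Sum>v\<in>range u. G v * m (u -` {v}))"
proof -
  have rg: "range (\<lambda>x. G (u x)) = G ` range u" by auto
  have "simple_int m (\<lambda>x. G (u x)) = (\<Sum>y\<in>G ` range u. y * m ((\<lambda>x. G (u x)) -` {y}))"
    unfolding simple_int_def rg ..
  also have "\<dots> = (\<Sum>y\<in>G ` range u. (\<Sum>v\<in>{v. v \<in> range u \<and> G v = y}. G v * m (u -` {v})))"
  proof (rule sum.cong[OF refl])
    fix y assume y: "y \<in> G ` range u"
    have eq: "(\<lambda>x. G (u x)) -` {y} = (\<Union>v\<in>{v. v \<in> range u \<and> G v = y}. u -` {v})" by auto
    have "m ((\<lambda>x. G (u x)) -` {y}) = (\<Sum>v\<in>{v. v \<in> range u \<and> G v = y}. m (u -` {v}))"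
      unfolding eq by (rule fa_finite_union) (use fin in \<open>auto simp: disjoint_family_on_def\<close>)
    hence "y * m ((\<lambda>x. G (u x)) -` {y}) = (\<Sum>v\<in>{v. v \<in> range u \<and> G v = y}. y * m (u -` {v}))"
      by (simp add: sum_distrib_left)
    also have "\<dots> = (\<Sum>v\<in>{v. v \<in> range u \<and> G v = y}. G v * m (u -` {v}))"
      by (rule sum.cong) auto
    finally show "y * m ((\<lambda>x. G (u x)) -` {y}) = \<dots>" .
  qed
  also have "\<dots> = (\<Sum>v\<in>range u. G v * m (u -` {v}))"
    by (rule sum.group) (use fin in auto)
  finally show ?thesis .
qed

lemma simple_int_id: "finite (range s) \<Longrightarrow> simple_int m s = (\<Sum>v\<in>range s. v * m (s -` {v}))"
  using simple_int_comp[of s "\<lambda>x. x"] by simp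

lemma simple_int_pair:
  assumes "finite (range s)" "finite (range t)"
  shows "simple_int m (\<lambda>x. F (s x) (t x)) =
    (\<Sum>v\<in>range (\<lambda>x. (s x, t x)). F (fst v) (snd v) * m ((\<lambda>x. (s x, t x)) -` {v}))"
  using simple_int_comp[OF finite_range_pair[OF assms], of "\<lambda>v. F (fst v) (snd v)"] by simp

lemma simple_int_lin:
  assumes "finite (range s)" "finite (range t)"
  shows "simple_int m (\<lambda>x. a * s x + b * t x) = a * simple_int m s + b * simple_int m t"
proof -
  have 1: "simple_int m s = (\<Sum>v\<in>range (\<lambda>x. (s x, t x)). fst v * m ((\<lambda>x. (s x, t x)) -` {v}))"
    using simple_int_pair[OF assms, of "\<lambda>p q. p"] by simp
  have 2: "simple_int m t = (\<Sum>v\<in>range (\<lambda>x. (s x, t x)). snd v * m ((\<lambda>x. (s x, t x)) -` {v}))"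
    using simple_int_pair[OF assms, of "\<lambda>p q. q"] by simp
  have 3: "simple_int m (\<lambda>x. a * s x + b * t x) = (\<Sum>v\<in>range (\<lambda>x. (s x, t x)). (a * fst v + b * snd v) * m ((\<lambda>x. (s x, t x)) -` {v}))"
    using simple_int_pair[OF assms, of "\<lambda>p q. a * p + b * q"] by simp
  show ?thesis unfolding 1 2 3
    by (simp add: sum_distrib_left sum.distrib algebra_simps)
qed

lemma simple_int_mono:
  assumes "finite (range s)" "finite (range t)" "\<And>x. s x \<le> t x"
  shows "simple_int m s \<le> simple_int m t"
proof -
  have 1: "simple_int m s = (\<Sum>v\<in>range (\<lambda>x. (s x, t x)). fst v * m ((\<lambda>x. (s x, t x)) -` {v}))"
    using simple_int_pair[OF assms(1,2), of "\<lambda>p q. p"] by simp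
  have 2: "simple_int m t = (\<Sum>v\<in>range (\<lambda>x. (s x, t x)). snd v * m ((\<lambda>x. (s x, t x)) -` {v}))"
    using simple_int_pair[OF assms(1,2), of "\<lambda>p q. q"] by simp
  show ?thesis unfolding 1 2
    by (rule sum_mono) (auto intro!: mult_right_mono fa_nonneg assms(3))
qed

lemma simple_int_const: "simple_int m (\<lambda>_. c) = c"
proof -
  have "range (\<lambda>_::'a. c) = {c}" by auto
  thus ?thesis unfolding simple_int_def by (simp add: fa_univ)
qed

lemma simple_int_indicator: "simple_int m (indicator A) = m A"
proof -
  have f: "finite (range (indicator A :: 'a \<Rightarrow> real))"
    by (rule finite_subset[of _ "{0,1}"]) (auto simp: indicator_def)
  have "simple_int m (indicator A) = simple_int m (\<lambda>x. (\<lambda>v. if v then 1 else 0) (x \<in> A))"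
    by (rule arg_cong[where f="simple_int m"]) (auto simp: indicator_def)
  also have "\<dots> = (\<Sum>v\<in>range (\<lambda>x. x \<in> A). (if v then 1 else 0) * m ((\<lambda>x. x \<in> A) -` {v}))"
    by (rule simple_int_comp) (rule finite_subset[of _ UNIV], auto)
  also have "\<dots> = (\<Sum>v\<in>UNIV. (if v then 1 else 0) * m ((\<lambda>x. x \<in> A) -` {v}))"
    by (rule sum.mono_neutral_left) (auto simp: fa_empty)
  also have "\<dots> = m ((\<lambda>x. x \<in> A) -` {True})" by (simp add: UNIV_bool)
  also have "(\<lambda>x. x \<in> A) -` {True} = A" by auto
  finally show ?thesis .
qed


lemma simple_int_add: "finite (range s) \<Longrightarrow> finite (range t) \<Longrightarrow>
  simple_int m (\<lambda>x. s x + t x) = simple_int m s + simple_int m t"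
  using simple_int_lin[of s t 1 1] by simp

lemma simple_int_diff: "finite (range s) \<Longrightarrow> finite (range t) \<Longrightarrow>
  simple_int m (\<lambda>x. s x - t x) = simple_int m s - simple_int m t"
  using simple_int_lin[of s t 1 "-1"] by simp

lemma simple_int_cmult: "finite (range s) \<Longrightarrow>
  simple_int m (\<lambda>x. c * s x) = c * simple_int m s"
  using simple_int_lin[of s s c 0] by simp

lemma simple_int_nonneg: "finite (range s) \<Longrightarrow> (\<And>x. s x \<ge> 0) \<Longrightarrow> simple_int m s \<ge> 0"
  using simple_int_mono[of "\<lambda>_. 0" s] by (simp add: simple_int_const)

lemma simple_int_le_const: "finite (range s) \<Longrightarrow> (\<And>x. s x \<le> c) \<Longrightarrow> simple_int m s \<le> c"
  using simple_int_mono[of s "\<lambda>_. c"] by (simp add: simple_int_const)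

lemma ds_zero_lemma:
  assumes fin: "\<And>n. finite (range (w n))"
    and meas: "\<And>\<epsilon>. \<epsilon> > 0 \<Longrightarrow> (\<lambda>n. m {x. \<bar>w n x\<bar> > \<epsilon>}) \<longlonglongrightarrow> 0"
    and cau: "\<And>\<epsilon>. \<epsilon> > 0 \<Longrightarrow> \<exists>N. \<forall>n\<ge>N. \<forall>k\<ge>N. simple_int m (\<lambda>x. \<bar>w n x - w k x\<bar>) < \<epsilon>"
  shows "(\<lambda>n. simple_int m (\<lambda>x. \<bar>w n x\<bar>)) \<longlonglongrightarrow> 0"
proof (rule LIMSEQ_I)
  fix e :: real assume e: "0 < e"
  obtain N where N: "\<forall>n\<ge>N. \<forall>k\<ge>N. simple_int m (\<lambda>x. \<bar>w n x - w k x\<bar>) < e/3"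
    using cau[of "e/3"] e by auto
  obtain C where C: "C \<ge> 0" "\<forall>x. \<bar>w N x\<bar> \<le> C" using finite_range_bound[OF fin[of N]] by blast
  have "(\<lambda>n. m {x. \<bar>w n x\<bar> > e/3}) \<longlonglongrightarrow> 0" using meas[of "e/3"] e by linarith
  moreover have "e / (3 * (C + 1)) > 0" using e C by simp
  ultimately obtain N2 where N2: "\<forall>n\<ge>N2. norm (m {x. \<bar>w n x\<bar> > e/3} - 0) < e / (3 * (C + 1))"
    using LIMSEQ_D by blast
  show "\<exists>no. \<forall>n\<ge>no. norm (simple_int m (\<lambda>x. \<bar>w n x\<bar>) - 0) < e"
  proof (intro exI allI impI)
    fix n assume n: "max N N2 \<le> n"
    define E where "E = {x. \<bar>w n x\<bar> > e/3}"
    have fr: "finite (range (\<lambda>x. \<bar>w n x - w N x\<bar>))"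
      by (rule finite_range_comb) (use fin in auto)
    have fr2: "finite (range (\<lambda>x. \<bar>w n x\<bar>))" by (rule finite_range_comp) (use fin in auto)
    have fr3: "finite (range (\<lambda>x. C * indicator E x))"
      by (rule finite_range_comp) (rule finite_range_indicator)
    have fr4: "finite (range (\<lambda>x. \<bar>w n x - w N x\<bar> + C * indicator E x))"
      by (rule finite_range_comb[OF fr fr3])
    have pw: "\<bar>w n x\<bar> \<le> (\<bar>w n x - w N x\<bar> + C * indicator E x) + e/3" for x
    proof (cases "x \<in> E")
      case True then show ?thesis using C(2)[rule_format, of x] e by (auto simp: indicator_def)
    next
      case False then show ?thesis using e by (auto simp: E_def indicator_def)
    qed
    have "simple_int m (\<lambda>x. \<bar>w n x\<bar>) \<le> simple_int m (\<lambda>x. (\<bar>w n x - w N x\<bar> + C * indicator E x) + e/3)"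
      by (rule simple_int_mono[OF fr2 _ pw]) (rule finite_range_comb[OF fr4 finite_range_const])
    also have "\<dots> = simple_int m (\<lambda>x. \<bar>w n x - w N x\<bar>) + C * m E + e/3"
      using simple_int_add[OF fr4 finite_range_const] simple_int_add[OF fr fr3]
        simple_int_cmult[OF finite_range_indicator, of C E] simple_int_indicator simple_int_const
      by simp
    also have "\<dots> < e/3 + C * (e / (3 * (C + 1))) + e/3"
    proof -
      have "simple_int m (\<lambda>x. \<bar>w n x - w N x\<bar>) < e/3" using N n by auto
      moreover have "m E < e / (3 * (C + 1))" using N2 n fa_nonneg[of E] by (auto simp: E_def)
      hence "C * m E \<le> C * (e / (3 * (C + 1)))" using C(1) by (intro mult_left_mono) auto
      ultimately show ?thesis by linarith
    qed
    also have "\<dots> \<le> e"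
    proof -
      have "C * (e / (3 * (C + 1))) \<le> e/3" using C(1) e by (simp add: field_simps)
      thus ?thesis by linarith
    qed
    finally have "simple_int m (\<lambda>x. \<bar>w n x\<bar>) < e" .
    moreover have "simple_int m (\<lambda>x. \<bar>w n x\<bar>) \<ge> 0" by (rule simple_int_nonneg[OF fr2]) auto
    ultimately show "norm (simple_int m (\<lambda>x. \<bar>w n x\<bar>) - 0) < e" by simp
  qed
qed


lemma ds_mono:
  assumes g: "ds_has_integral m g I" and h: "ds_has_integral m h J" and le: "\<And>x. g x \<le> h x"
  shows "I \<le> J"
proof -
  obtain s where sf: "\<And>n. finite (range (s n))"
    and sm: "\<And>\<epsilon>. \<epsilon>>0 \<Longrightarrow> (\<lambda>n. m {x. \<bar>s n x - g x\<bar> > \<epsilon>}) \<longlonglongrightarrow> 0"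
    and sc: "\<And>\<epsilon>. \<epsilon>>0 \<Longrightarrow> \<exists>N. \<forall>n\<ge>N. \<forall>k\<ge>N. simple_int m (\<lambda>x. \<bar>s n x - s k x\<bar>) < \<epsilon>"
    and sl: "(\<lambda>n. simple_int m (s n)) \<longlonglongrightarrow> I"
    using g unfolding ds_has_integral_def by blast
  obtain t where tf: "\<And>n. finite (range (t n))"
    and tm: "\<And>\<epsilon>. \<epsilon>>0 \<Longrightarrow> (\<lambda>n. m {x. \<bar>t n x - h x\<bar> > \<epsilon>}) \<longlonglongrightarrow> 0"
    and tc: "\<And>\<epsilon>. \<epsilon>>0 \<Longrightarrow> \<exists>N. \<forall>n\<ge>N. \<forall>k\<ge>N. simple_int m (\<lambda>x. \<bar>t n x - t k x\<bar>) < \<epsilon>"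
    and tl: "(\<lambda>n. simple_int m (t n)) \<longlonglongrightarrow> J"
    using h unfolding ds_has_integral_def by blast
  define w where "w n x = max (s n x - t n x) 0" for n x
  have wf: "finite (range (w n))" for n
    unfolding w_def by (rule finite_range_comb[OF sf tf])
  have wm: "(\<lambda>n. m {x. \<bar>w n x\<bar> > \<epsilon>}) \<longlonglongrightarrow> 0" if e: "\<epsilon> > 0" for \<epsilon>
  proof (rule tendsto_sandwich[of "\<lambda>_. 0" _ _ "\<lambda>n. m {x. \<bar>s n x - g x\<bar> > \<epsilon>/2} + m {x. \<bar>t n x - h x\<bar> > \<epsilon>/2}"])
    show "\<forall>\<^sub>F n in sequentially. 0 \<le> m {x. \<bar>w n x\<bar> > \<epsilon>}" by (simp add: fa_nonneg)
    show "\<forall>\<^sub>F n in sequentially. m {x. \<bar>w n x\<bar> > \<epsilon>} \<le> m {x. \<bar>s n x - g x\<bar> > \<epsilon>/2} + m {x. \<bar>t n x - h x\<bar> > \<epsilon>/2}"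
    proof (rule always_eventually, rule allI)
      fix n
      have "{x. \<bar>w n x\<bar> > \<epsilon>} \<subseteq> {x. \<bar>s n x - g x\<bar> > \<epsilon>/2} \<union> {x. \<bar>t n x - h x\<bar> > \<epsilon>/2}"
      proof
        fix x assume "x \<in> {x. \<bar>w n x\<bar> > \<epsilon>}"
        hence "s n x - t n x > \<epsilon>" using e by (auto simp: w_def max_def split: if_splits)
        thus "x \<in> {x. \<bar>s n x - g x\<bar> > \<epsilon>/2} \<union> {x. \<bar>t n x - h x\<bar> > \<epsilon>/2}" using le[of x] by (auto simp: abs_if split: if_splits)
      qed
      thus "m {x. \<bar>w n x\<bar> > \<epsilon>} \<le> m {x. \<bar>s n x - g x\<bar> > \<epsilon>/2} + m {x. \<bar>t n x - h x\<bar> > \<epsilon>/2}"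
        using fa_mono fa_subadd order_trans by metis
    qed
    show "(\<lambda>n. 0) \<longlonglongrightarrow> (0::real)" by simp
    show "(\<lambda>n. m {x. \<bar>s n x - g x\<bar> > \<epsilon>/2} + m {x. \<bar>t n x - h x\<bar> > \<epsilon>/2}) \<longlonglongrightarrow> 0"
      using tendsto_add[OF sm tm, of "\<epsilon>/2" "\<epsilon>/2"] e by simp
  qed
  have wc: "\<exists>N. \<forall>n\<ge>N. \<forall>k\<ge>N. simple_int m (\<lambda>x. \<bar>w n x - w k x\<bar>) < \<epsilon>" if e: "\<epsilon> > 0" for \<epsilon>
  proof -
    obtain N1 where N1: "\<forall>n\<ge>N1. \<forall>k\<ge>N1. simple_int m (\<lambda>x. \<bar>s n x - s k x\<bar>) < \<epsilon>/2"
      using sc[of "\<epsilon>/2"] e by auto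
    obtain N2 where N2: "\<forall>n\<ge>N2. \<forall>k\<ge>N2. simple_int m (\<lambda>x. \<bar>t n x - t k x\<bar>) < \<epsilon>/2"
      using tc[of "\<epsilon>/2"] e by auto
    show ?thesis
    proof (intro exI allI impI)
      fix n k assume n: "max N1 N2 \<le> n" and k: "max N1 N2 \<le> k"
      have f1: "finite (range (\<lambda>x. \<bar>s n x - s k x\<bar>))" by (rule finite_range_comb[OF sf sf])
      have f2: "finite (range (\<lambda>x. \<bar>t n x - t k x\<bar>))" by (rule finite_range_comb[OF tf tf])
      have "simple_int m (\<lambda>x. \<bar>w n x - w k x\<bar>) \<le> simple_int m (\<lambda>x. \<bar>s n x - s k x\<bar> + \<bar>t n x - t k x\<bar>)"
      proof (rule simple_int_mono)
        show "finite (range (\<lambda>x. \<bar>w n x - w k x\<bar>))" by (rule finite_range_comb[OF wf wf])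
        show "finite (range (\<lambda>x. \<bar>s n x - s k x\<bar> + \<bar>t n x - t k x\<bar>))" by (rule finite_range_comb[OF f1 f2])
        fix x show "\<bar>w n x - w k x\<bar> \<le> \<bar>s n x - s k x\<bar> + \<bar>t n x - t k x\<bar>"
          unfolding w_def by (simp add: max_def abs_if split: if_splits; linarith)
      qed
      also have "\<dots> < \<epsilon>"
      proof -
        have "simple_int m (\<lambda>x. \<bar>s n x - s k x\<bar>) < \<epsilon>/2" using N1 n k by auto
        moreover have "simple_int m (\<lambda>x. \<bar>t n x - t k x\<bar>) < \<epsilon>/2" using N2 n k by auto
        ultimately show ?thesis using simple_int_add[OF f1 f2] by linarith
      qed
      finally show "simple_int m (\<lambda>x. \<bar>w n x - w k x\<bar>) < \<epsilon>" .
    qed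
  qed
  have w0: "(\<lambda>n. simple_int m (\<lambda>x. \<bar>w n x\<bar>)) \<longlonglongrightarrow> 0"
    by (rule ds_zero_lemma[OF wf wm wc])
  have "\<forall>n. simple_int m (s n) \<le> simple_int m (t n) + simple_int m (\<lambda>x. \<bar>w n x\<bar>)"
  proof
    fix n
    have fw: "finite (range (\<lambda>x. \<bar>w n x\<bar>))" by (rule finite_range_comp[OF wf])
    have "simple_int m (s n) \<le> simple_int m (\<lambda>x. t n x + \<bar>w n x\<bar>)"
      by (rule simple_int_mono[OF sf finite_range_comb[OF tf fw]]) (auto simp: w_def)
    thus "simple_int m (s n) \<le> simple_int m (t n) + simple_int m (\<lambda>x. \<bar>w n x\<bar>)"
      using simple_int_add[OF tf fw] by simp
  qed
  moreover have "(\<lambda>n. simple_int m (t n) + simple_int m (\<lambda>x. \<bar>w n x\<bar>)) \<longlonglongrightarrow> J + 0"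
    by (rule tendsto_add[OF tl w0])
  ultimately show ?thesis using LIMSEQ_le[OF sl] by fastforce
qed

lemma ds_integral_unique: "ds_has_integral m g I \<Longrightarrow> ds_integral m g = I"
  unfolding ds_integral_def
  by (rule the_equality) (auto intro: antisym ds_mono)

lemma ds_has_integral_simple:
  assumes f: "finite (range s)" shows "ds_has_integral m s (simple_int m s)"
  unfolding ds_has_integral_def
proof (intro exI[of _ "\<lambda>n. s"] conjI allI impI)
  show "finite (range s)" for n :: nat by (rule f)
  show "(\<lambda>n. m {x. \<bar>s x - s x\<bar> > \<epsilon>}) \<longlonglongrightarrow> 0" if "\<epsilon> > 0" for \<epsilon>
    using that by (simp add: fa_empty)
  show "\<exists>N. \<forall>n\<ge>N. \<forall>k\<ge>N. simple_int m (\<lambda>x. \<bar>s x - s x\<bar>) < \<epsilon>" if "\<epsilon> > 0" for \<epsilon>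
    using that by (simp add: simple_int_const)
  show "(\<lambda>n. simple_int m s) \<longlonglongrightarrow> simple_int m s" by simp
qed

lemma approx_integral:
  assumes sf: "\<And>n. finite (range (s n))"
    and sa: "\<And>n x. \<bar>s n x - g x\<bar> \<le> 1 / (real n + 1)"
  shows "convergent (\<lambda>n. simple_int m (s n))"
    and "ds_has_integral m g (lim (\<lambda>n. simple_int m (s n)))"
proof -
  have arch: "\<exists>M::nat. \<forall>n\<ge>M. 1 / (real n + 1) < e" if "e > 0" for e :: real
  proof -
    obtain M :: nat where M: "1 / e < real M" using reals_Archimedean2 by blast
    have "1 / (real M + 1) < e" using M that by (simp add: field_simps)
    moreover have "1 / (real n + 1) \<le> 1 / (real M + 1)" if "n \<ge> M" for n
      using that by (simp add: frac_le)
    ultimately show ?thesis by (meson le_less_trans)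
  qed
  have diff: "simple_int m (\<lambda>x. \<bar>s n x - s k x\<bar>) \<le> 1/(real n + 1) + 1/(real k + 1)" for n k
  proof (rule simple_int_le_const)
    show "finite (range (\<lambda>x. \<bar>s n x - s k x\<bar>))" by (rule finite_range_comb[OF sf sf])
    fix x show "\<bar>s n x - s k x\<bar> \<le> 1/(real n + 1) + 1/(real k + 1)"
      using sa[of n x] sa[of k x] by linarith
  qed
  have cau: "\<exists>N. \<forall>n\<ge>N. \<forall>k\<ge>N. simple_int m (\<lambda>x. \<bar>s n x - s k x\<bar>) < e" if e: "e > 0" for e
  proof -
    obtain M where M: "\<forall>n\<ge>M. 1 / (real n + 1) < e/2" using arch[of "e/2"] e by auto
    show ?thesis
    proof (intro exI[of _ M] allI impI)
      fix n k assume "M \<le> n" "M \<le> k"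
      hence "1/(real n+1) < e/2" "1/(real k+1) < e/2" using M by auto
      thus "simple_int m (\<lambda>x. \<bar>s n x - s k x\<bar>) < e" using diff[of n k] by linarith
    qed
  qed
  have "Cauchy (\<lambda>n. simple_int m (s n))"
  proof (rule CauchyI)
    fix e :: real assume e: "0 < e"
    obtain N where N: "\<forall>n\<ge>N. \<forall>k\<ge>N. simple_int m (\<lambda>x. \<bar>s n x - s k x\<bar>) < e" using cau e by blast
    show "\<exists>M. \<forall>n\<ge>M. \<forall>k\<ge>M. norm (simple_int m (s n) - simple_int m (s k)) < e"
    proof (intro exI allI impI)
      fix n k assume "N \<le> n" "N \<le> k"
      hence lt: "simple_int m (\<lambda>x. \<bar>s n x - s k x\<bar>) < e" using N by auto
      have f1: "finite (range (\<lambda>x. s n x - s k x))" by (rule finite_range_comb[OF sf sf])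
      have f2: "finite (range (\<lambda>x. \<bar>s n x - s k x\<bar>))" by (rule finite_range_comb[OF sf sf])
      have "simple_int m (\<lambda>x. s n x - s k x) \<le> simple_int m (\<lambda>x. \<bar>s n x - s k x\<bar>)"
        by (rule simple_int_mono[OF f1 f2]) auto
      moreover have "simple_int m (\<lambda>x. s k x - s n x) \<le> simple_int m (\<lambda>x. \<bar>s n x - s k x\<bar>)"
        by (rule simple_int_mono[OF finite_range_comb[OF sf sf] f2]) auto
      ultimately show "norm (simple_int m (s n) - simple_int m (s k)) < e"
        using simple_int_diff[OF sf sf, of n k] simple_int_diff[OF sf sf, of k n] lt by auto
    qed
  qed
  thus conv: "convergent (\<lambda>n. simple_int m (s n))" by (rule Cauchy_convergent)
  show "ds_has_integral m g (lim (\<lambda>n. simple_int m (s n)))"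
    unfolding ds_has_integral_def
  proof (intro exI[of _ s] conjI allI impI)
    show "finite (range (s n))" for n by (rule sf)
    show "(\<lambda>n. m {x. \<bar>s n x - g x\<bar> > \<epsilon>}) \<longlonglongrightarrow> 0" if e: "\<epsilon> > 0" for \<epsilon>
    proof (rule LIMSEQ_I)
      fix r :: real assume "0 < r"
      obtain M where M: "\<forall>n\<ge>M. 1 / (real n + 1) < \<epsilon>" using arch e by blast
      have "{x. \<bar>s n x - g x\<bar> > \<epsilon>} = {}" if "n \<ge> M" for n
      proof -
        have "\<bar>s n x - g x\<bar> < \<epsilon>" for x using M that sa[of n x] by force
        thus ?thesis by (auto simp: not_less less_imp_le)
      qed
      thus "\<exists>no. \<forall>n\<ge>no. norm (m {x. \<bar>s n x - g x\<bar> > \<epsilon>} - 0) < r"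
        using \<open>0 < r\<close> by (intro exI[of _ M]) (simp add: fa_empty)
    qed
    show "\<exists>N. \<forall>n\<ge>N. \<forall>k\<ge>N. simple_int m (\<lambda>x. \<bar>s n x - s k x\<bar>) < \<epsilon>" if "\<epsilon> > 0" for \<epsilon>
      using cau that by blast
    show "(\<lambda>n. simple_int m (s n)) \<longlonglongrightarrow> lim (\<lambda>n. simple_int m (s n))"
      using conv by (simp add: convergent_LIMSEQ_iff)
  qed
qed

end

lemma approx_exists:
  assumes "\<And>x. \<bar>g x\<bar> \<le> C"
  shows "\<exists>s. (\<forall>n. finite (range (s n))) \<and> (\<forall>n x. \<bar>s n x - g x\<bar> \<le> 1 / (real n + 1))"
proof (intro exI conjI allI)
  define s where "s n x = real_of_int \<lfloor>(real n + 1) * g x\<rfloor> / (real n + 1)" for n x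
  fix n
  have "range (s n) \<subseteq> (\<lambda>k. real_of_int k / (real n + 1)) ` {\<lfloor>(real n + 1) * (-C)\<rfloor> .. \<lfloor>(real n + 1) * C\<rfloor>}"
  proof
    fix y assume "y \<in> range (s n)"
    then obtain x where y: "y = s n x" by auto
    have "(real n + 1) * (-C) \<le> (real n + 1) * g x" "(real n + 1) * g x \<le> (real n + 1) * C"
      using assms[of x] by (auto intro!: mult_left_mono simp del: mult_minus_right)
    hence "\<lfloor>(real n + 1) * g x\<rfloor> \<in> {\<lfloor>(real n + 1) * (-C)\<rfloor> .. \<lfloor>(real n + 1) * C\<rfloor>}"
      by (auto intro: floor_mono)
    thus "y \<in> (\<lambda>k. real_of_int k / (real n + 1)) ` {\<lfloor>(real n + 1) * (-C)\<rfloor> .. \<lfloor>(real n + 1) * C\<rfloor>}"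
      unfolding y s_def by blast
  qed
  thus "finite (range (s n))" by (rule finite_subset) simp
  fix x
  have a: "real_of_int \<lfloor>(real n + 1) * g x\<rfloor> \<le> (real n + 1) * g x" by (rule of_int_floor_le)
  have b: "(real n + 1) * g x < real_of_int \<lfloor>(real n + 1) * g x\<rfloor> + 1" by (rule real_of_int_floor_add_one_gt)
  have p: "real n + 1 > 0" by simp
  have "s n x \<le> g x" using a p unfolding s_def by (simp add: divide_le_eq mult.commute)
  moreover have "g x - s n x < 1 / (real n + 1)"
  proof -
    have "g x - s n x = ((real n + 1) * g x - real_of_int \<lfloor>(real n + 1) * g x\<rfloor>) / (real n + 1)"
      using p unfolding s_def by (simp add: field_simps)
    also have "\<dots> < 1 / (real n + 1)" using b p by (intro divide_strict_right_mono) linarith+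
    finally show ?thesis .
  qed
  ultimately show "\<bar>s n x - g x\<bar> \<le> 1 / (real n + 1)" by simp
qed


section \<open>Regular stochastic orders\<close>

context
  fixes R :: "('a \<Rightarrow> real) \<Rightarrow> ('a \<Rightarrow> real) \<Rightarrow> bool"
  assumes rso: "regular_stochastic_order R"
begin

lemma R_refl: "R f f" using rso unfolding regular_stochastic_order_def by blast
lemma R_trans: "R f g \<Longrightarrow> R g h \<Longrightarrow> R f h" using rso unfolding regular_stochastic_order_def by blast
lemma R_triv: "\<not> R (\<lambda>_. 0) (\<lambda>_. 1)" using rso unfolding regular_stochastic_order_def by blast
lemma R_cone: "R f1 g1 \<Longrightarrow> R f2 g2 \<Longrightarrow> a1 \<ge> 0 \<Longrightarrow> a2 \<ge> 0 \<Longrightarrow>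
   R (\<lambda>x. a1 * f1 x + a2 * f2 x) (\<lambda>x. a1 * g1 x + a2 * g2 x)"
  using rso unfolding regular_stochastic_order_def by blast
lemma R_cert: "(\<And>x. f x \<ge> 0) \<Longrightarrow> R f (\<lambda>_. 0)"
  using rso unfolding regular_stochastic_order_def by blast
lemma R_rest: "R f (\<lambda>_. 0) \<Longrightarrow> R (\<lambda>x. f x * indicator A x) (\<lambda>_. 0)"
  using rso unfolding regular_stochastic_order_def by blast
lemma R_cong: "R f g \<Longrightarrow> (\<And>x. f x = f' x) \<Longrightarrow> (\<And>x. g x = g' x) \<Longrightarrow> R f' g'"
proof -
  assume "R f g" "\<And>x. f x = f' x" "\<And>x. g x = g' x"
  moreover hence "f = f'" "g = g'" by auto
  ultimately show ?thesis by simp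
qed
lemma R_add: "R f g \<Longrightarrow> R f' g' \<Longrightarrow> R (\<lambda>x. f x + f' x) (\<lambda>x. g x + g' x)"
  by (rule R_cong[OF R_cone[of f g f' g' 1 1]]) auto
lemma R_shift: "R f g \<Longrightarrow> R (\<lambda>x. f x + h x) (\<lambda>x. g x + h x)"
  by (rule R_add[OF _ R_refl])
lemma R_scale: "c \<ge> 0 \<Longrightarrow> R f g \<Longrightarrow> R (\<lambda>x. c * f x) (\<lambda>x. c * g x)"
  by (rule R_cong[OF R_cone[of f g g g c 0]]) (auto intro: R_refl)
lemma R_sub0: "R f g \<Longrightarrow> R (\<lambda>x. f x - g x) (\<lambda>_. 0)"
  by (rule R_cong[OF R_shift[of f g "\<lambda>x. - g x"]]) auto
lemma R_from_sub0: "R (\<lambda>x. f x - g x) (\<lambda>_. 0) \<Longrightarrow> R f g"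
  by (rule R_cong[OF R_shift[of _ _ g]]) auto
lemma R_ge: "(\<And>x. g x \<le> f x) \<Longrightarrow> R f g"
  by (rule R_from_sub0, rule R_cert) auto

lemma R_null:
  assumes f: "R f (\<lambda>_. a)" and d: "\<delta> > 0"
  shows "R (\<lambda>_. 0) (indicator {x. f x \<le> a - \<delta>})"
proof -
  define N where "N = {x. f x \<le> a - \<delta>}"
  have 1: "R (\<lambda>x. (f x - a) * indicator N x) (\<lambda>_. 0)" by (rule R_rest[OF R_sub0[OF f]])
  have 2: "R (\<lambda>x. - \<delta> * indicator N x - (f x - a) * indicator N x) (\<lambda>_. 0)"
    by (rule R_cert) (auto simp: N_def indicator_def)
  have 3: "R (\<lambda>x. - \<delta> * indicator N x) (\<lambda>_. 0)"
    by (rule R_cong[OF R_add[OF 1 2]]) auto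
  have 4: "R (\<lambda>_. 0) (\<lambda>x. \<delta> * indicator N x)"
    by (rule R_cong[OF R_shift[OF 3, of "\<lambda>x. \<delta> * indicator N x"]]) auto
  have 5: "R (\<lambda>x. (1/\<delta>) * 0) (\<lambda>x. (1/\<delta>) * (\<delta> * indicator N x))"
    by (rule R_scale[OF _ 4]) (use d in auto)
  show ?thesis unfolding N_def[symmetric]
    by (rule R_cong[OF 5]) (use d in auto)
qed

end

definition trunc :: "('a \<Rightarrow> real) \<Rightarrow> nat \<Rightarrow> 'a \<Rightarrow> real" where
  "trunc f n x = min (max (f x) 0) (real n) - min (max (- f x) 0) (real n)"

lemma trunc_eq: "trunc f n x = max (- real n) (min (f x) (real n))"
  unfolding trunc_def by (auto simp: min_def max_def)

lemma trunc_bound: "\<bar>trunc f n x\<bar> \<le> real n"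
  unfolding trunc_eq by auto

lemma trunc_int_trunc: "trunc_int m f =
   (if (\<exists>L. (\<lambda>n. ereal (ds_integral m (trunc f n))) \<longlonglongrightarrow> L)
    then lim (\<lambda>n. ereal (ds_integral m (trunc f n))) else \<infinity>)"
  unfolding trunc_int_def trunc_def Let_def ..

lemma bounded_has_integral:
  assumes fa: "fa_prob m" and b: "\<And>x. \<bar>g x\<bar> \<le> C"
  shows "ds_has_integral m g (ds_integral m g)"
proof -
  obtain s where "\<forall>n. finite (range (s n))" "\<forall>n x. \<bar>s n x - g x\<bar> \<le> 1 / (real n + 1)"
    using approx_exists[of g C] b by blast
  hence "ds_has_integral m g (lim (\<lambda>n. simple_int m (s n)))"
    using approx_integral(2)[OF fa] by blast
  thus ?thesis using ds_integral_unique[OF fa] by simp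
qed

lemma easy_direction:
  assumes rso: "regular_stochastic_order R"
    and m: "m \<in> P_order R"
    and sup: "(SUP f\<in>Gamma_order R \<Gamma>. trunc_int m f) \<le> 0"
    and f: "f \<in> \<Gamma>" "R f (\<lambda>_. 1)"
  shows False
proof -
  have fa: "fa_prob m" using m unfolding P_order_def by auto
  have fG: "f \<in> Gamma_order R \<Gamma>" using f unfolding Gamma_order_def by auto
  have le0: "trunc_int m f \<le> 0" using SUP_upper[OF fG, of "trunc_int m"] sup by (rule order_trans)
  define N where "N = {x. f x \<le> 1 - 1/2}"
  have "R (\<lambda>_. 0) (indicator N)" unfolding N_def using R_null[OF rso, of f 1 "1/2"] f(2) by simp
  hence mN: "m N = 0" using m unfolding P_order_def by auto
  have lb: "ds_integral m (trunc f n) \<ge> 1/2" if n: "n \<ge> 1" for n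
  proof -
    have fs: "finite (range (\<lambda>x. 1/2 - (real n + 1) * indicator N x))"
      by (rule finite_range_comp[OF finite_range_indicator])
    have "simple_int m (\<lambda>x. 1/2 - (real n + 1) * indicator N x) = 1/2"
      using simple_int_diff[OF fa finite_range_const finite_range_comp[OF finite_range_indicator],
          of "1/2" "\<lambda>v. (real n + 1) * v" N]
        simple_int_cmult[OF fa finite_range_indicator] simple_int_indicator[OF fa] simple_int_const[OF fa] mN
      by simp
    moreover have "simple_int m (\<lambda>x. 1/2 - (real n + 1) * indicator N x) \<le> ds_integral m (trunc f n)"
    proof (rule ds_mono[OF fa ds_has_integral_simple[OF fa fs] bounded_has_integral[OF fa trunc_bound]])
      fix x show "1/2 - (real n + 1) * indicator N x \<le> trunc f n x"
      proof (cases "x \<in> N")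
        case True thus ?thesis using trunc_bound[of f n x] by auto
      next
        case False thus ?thesis using n unfolding trunc_eq by (auto simp: N_def indicator_def)
      qed
    qed
    ultimately show ?thesis by simp
  qed
  have ge: "trunc_int m f \<ge> ereal (1/2)"
  proof (cases "\<exists>L. (\<lambda>n. ereal (ds_integral m (trunc f n))) \<longlonglongrightarrow> L")
    case True
    then obtain L where L: "(\<lambda>n. ereal (ds_integral m (trunc f n))) \<longlonglongrightarrow> L" by blast
    have "ereal (1/2) \<le> L"
      by (rule LIMSEQ_le_const[OF L]) (use lb in \<open>auto intro!: exI[of _ 1]\<close>)
    thus ?thesis using L True by (simp add: trunc_int_trunc limI del: ereal_divide)
  next
    case False thus ?thesis by (simp add: trunc_int_trunc)
  qed
  have "ereal (1/2) \<le> 0" using order_trans[OF ge le0] .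
  thus False by (simp add: zero_ereal_def del: ereal_divide)
qed


section \<open>Hahn--Banach type construction\<close>

definition bnd :: "('a \<Rightarrow> real) \<Rightarrow> bool" where "bnd g \<longleftrightarrow> (\<exists>C. \<forall>x. \<bar>g x\<bar> \<le> C)"

lemma bnd_add: "bnd g \<Longrightarrow> bnd h \<Longrightarrow> bnd (\<lambda>x. g x + h x)"
proof -
  assume "bnd g" "bnd h"
  then obtain C D where C: "\<forall>x. \<bar>g x\<bar> \<le> C" and D: "\<forall>x. \<bar>h x\<bar> \<le> D" unfolding bnd_def by blast
  have "\<bar>g x + h x\<bar> \<le> C + D" for x using C[rule_format, of x] D[rule_format, of x] by linarith
  thus ?thesis unfolding bnd_def by blast
qed

lemma bnd_scale: "bnd g \<Longrightarrow> bnd (\<lambda>x. c * g x)"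
proof -
  assume "bnd g"
  then obtain C where C: "\<forall>x. \<bar>g x\<bar> \<le> C" unfolding bnd_def by blast
  have "\<bar>c * g x\<bar> \<le> \<bar>c\<bar> * C" for x using C by (simp add: abs_mult mult_left_mono)
  thus ?thesis unfolding bnd_def by blast
qed

lemma bnd_minus: "bnd g \<Longrightarrow> bnd (\<lambda>x. - g x)"
  using bnd_scale[of g "-1"] by simp

lemma bnd_diff: "bnd g \<Longrightarrow> bnd h \<Longrightarrow> bnd (\<lambda>x. g x - h x)"
  using bnd_add[of g "\<lambda>x. - h x"] bnd_minus[of h] by simp

lemma bnd_const: "bnd (\<lambda>_. c)" unfolding bnd_def by blast

lemma bnd_ind: "bnd (indicator A)" unfolding bnd_def by (rule exI[of _ 1]) (simp add: indicator_def)

lemma bnd_simple: "finite (range s) \<Longrightarrow> bnd s"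
  using finite_range_bound unfolding bnd_def by blast

lemma bnd_abs: "bnd g \<Longrightarrow> bnd (\<lambda>x. \<bar>g x\<bar>)" unfolding bnd_def by simp

lemma bnd_trunc: "bnd (trunc f n)" using trunc_bound[of f n] unfolding bnd_def by blast

lemma inf_add_le:
  fixes X Y :: "real set"
  assumes "X \<noteq> {}" "Y \<noteq> {}" "\<And>a b. a \<in> X \<Longrightarrow> b \<in> Y \<Longrightarrow> z \<le> a + b"
  shows "z \<le> Inf X + Inf Y"
proof -
  have "z - Inf Y \<le> a" if a: "a \<in> X" for a
  proof -
    have "z - a \<le> Inf Y" by (rule cInf_greatest) (use assms a in force)+
    thus ?thesis by linarith
  qed
  hence "z - Inf Y \<le> Inf X" by (intro cInf_greatest) (use assms in auto)
  thus ?thesis by linarith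
qed

lemma inf_scale_le:
  fixes X :: "real set"
  assumes "X \<noteq> {}" "c > 0" "\<And>a. a \<in> X \<Longrightarrow> z \<le> c * a"
  shows "z \<le> c * Inf X"
proof -
  have "z / c \<le> Inf X"
    by (rule cInf_greatest) (use assms in \<open>auto simp: divide_le_eq mult.commute\<close>)
  thus ?thesis using assms(2) by (simp add: divide_le_eq mult.commute)
qed

locale HB =
  fixes R :: "('a \<Rightarrow> real) \<Rightarrow> ('a \<Rightarrow> real) \<Rightarrow> bool" and G :: "('a \<Rightarrow> real) set"
  assumes rso: "regular_stochastic_order R"
    and cone: "\<And>f g a b. f \<in> G \<Longrightarrow> g \<in> G \<Longrightarrow> a \<ge> 0 \<Longrightarrow> b \<ge> 0 \<Longrightarrow> (\<lambda>x. a * f x + b * g x) \<in> G"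
    and zeroG: "(\<lambda>_. 0) \<in> G"
    and no1: "\<And>f. f \<in> G \<Longrightarrow> \<not> R f (\<lambda>_. 1)"
begin

definition T :: "('a \<Rightarrow> real) \<Rightarrow> real set" where
  "T g = {t. \<exists>f\<in>G. R (\<lambda>x. t + f x - g x) (\<lambda>_. 0)}"

lemma G_scale: "f \<in> G \<Longrightarrow> c \<ge> 0 \<Longrightarrow> (\<lambda>x. c * f x) \<in> G"
  using cone[of f f c 0] by simp

lemma G_add: "f \<in> G \<Longrightarrow> g \<in> G \<Longrightarrow> (\<lambda>x. f x + g x) \<in> G"
  using cone[of f g 1 1] by simp

lemma no_pos: assumes f: "f \<in> G" and d: "d > 0" shows "\<not> R f (\<lambda>_. d)"
proof
  assume r: "R f (\<lambda>_. d)"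
  have d0: "1/d \<ge> 0" using d by simp
  have "R (\<lambda>x. (1/d) * f x) (\<lambda>x. (1/d) * d)" using R_scale[OF rso d0, of f "\<lambda>_. d"] r by blast
  moreover have "(\<lambda>x::'a. (1/d) * d) = (\<lambda>_. 1)" using d by simp
  ultimately have "R (\<lambda>x. (1/d) * f x) (\<lambda>_. 1)" by simp
  moreover have "(\<lambda>x. (1/d) * f x) \<in> G" by (rule G_scale[OF f d0])
  ultimately show False using no1 by blast
qed

lemma T_upper: assumes "\<And>x. \<bar>g x\<bar> \<le> C" shows "C \<in> T g"
proof -
  have "R (\<lambda>x. C + 0 - g x) (\<lambda>_. 0)"
  proof (rule R_cert[OF rso])
    fix x show "0 \<le> C + 0 - g x" using assms[of x] by linarith
  qed
  thus ?thesis unfolding T_def by (intro CollectI bexI[OF _ zeroG]) simp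
qed

lemma T_lower: assumes b: "\<And>x. \<bar>g x\<bar> \<le> C" and t: "t \<in> T g" shows "- C \<le> t"
proof (rule ccontr)
  assume neg: "\<not> - C \<le> t"
  obtain f where f: "f \<in> G" "R (\<lambda>x. t + f x - g x) (\<lambda>_. 0)" using t unfolding T_def by blast
  have c: "R (\<lambda>x. g x + C) (\<lambda>_. 0)"
  proof (rule R_cert[OF rso])
    fix x show "0 \<le> g x + C" using b[of x] by linarith
  qed
  have "R (\<lambda>x. (t + f x - g x) + (g x + C)) (\<lambda>x. 0 + 0)"
    using R_add[OF rso, of "\<lambda>x. t + f x - g x" "\<lambda>_. 0" "\<lambda>x. g x + C" "\<lambda>_. 0"] f(2) c by blast
  hence "R (\<lambda>x. f x - (- (t + C))) (\<lambda>_. 0)" by (rule R_cong[OF rso]) auto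
  hence "R f (\<lambda>_. - (t + C))" by (rule R_from_sub0[OF rso, of f "\<lambda>_. - (t + C)"])
  thus False using no_pos[OF f(1), of "- (t + C)"] neg by linarith
qed

lemma T_add: "s \<in> T g \<Longrightarrow> t \<in> T h \<Longrightarrow> s + t \<in> T (\<lambda>x. g x + h x)"
proof -
  assume "s \<in> T g" "t \<in> T h"
  then obtain f1 f2 where f: "f1 \<in> G" "R (\<lambda>x. s + f1 x - g x) (\<lambda>_. 0)"
    "f2 \<in> G" "R (\<lambda>x. t + f2 x - h x) (\<lambda>_. 0)" unfolding T_def by blast
  have "R (\<lambda>x. (s + f1 x - g x) + (t + f2 x - h x)) (\<lambda>x. 0 + 0)"
    using R_add[OF rso, of "\<lambda>x. s + f1 x - g x" "\<lambda>_. 0" "\<lambda>x. t + f2 x - h x" "\<lambda>_. 0"] f(2) f(4) by blast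
  hence "R (\<lambda>x. (s + t) + (f1 x + f2 x) - (g x + h x)) (\<lambda>_. 0)" by (rule R_cong[OF rso]) auto
  thus ?thesis unfolding T_def by (intro CollectI bexI[OF _ G_add[OF f(1) f(3)]]) simp
qed

lemma T_scale: "c > 0 \<Longrightarrow> t \<in> T g \<Longrightarrow> c * t \<in> T (\<lambda>x. c * g x)"
proof -
  assume c: "c > 0" and "t \<in> T g"
  then obtain f where f: "f \<in> G" "R (\<lambda>x. t + f x - g x) (\<lambda>_. 0)" unfolding T_def by blast
  have "R (\<lambda>x. c * (t + f x - g x)) (\<lambda>x. c * 0)"
    using R_scale[OF rso, of c "\<lambda>x. t + f x - g x" "\<lambda>_. 0"] f(2) c by auto
  hence "R (\<lambda>x. c * t + c * f x - c * g x) (\<lambda>_. 0)" by (rule R_cong[OF rso]) (auto simp: algebra_simps)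
  thus ?thesis unfolding T_def by (intro CollectI bexI[OF _ G_scale[OF f(1), of c]]) (use c in simp_all)
qed

lemma T_ne: "bnd g \<Longrightarrow> T g \<noteq> {}"
  unfolding bnd_def using T_upper by blast

lemma T_bdd: "bnd g \<Longrightarrow> bdd_below (T g)"
  unfolding bnd_def bdd_below_def using T_lower by blast

definition S :: "(('a \<Rightarrow> real) \<Rightarrow> real) set" where
  "S = {q. (\<forall>g. \<not> bnd g \<longrightarrow> q g = 0) \<and>
          (\<forall>g h. bnd g \<longrightarrow> bnd h \<longrightarrow> q (\<lambda>x. g x + h x) \<le> q g + q h) \<and>
          (\<forall>g c. bnd g \<longrightarrow> c > 0 \<longrightarrow> q (\<lambda>x. c * g x) \<le> c * q g) \<and>
          (\<forall>g t. bnd g \<longrightarrow> t \<in> T g \<longrightarrow> q g \<le> t)}"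

lemma S_off: "q \<in> S \<Longrightarrow> \<not> bnd g \<Longrightarrow> q g = 0" unfolding S_def by blast
lemma S_add: "q \<in> S \<Longrightarrow> bnd g \<Longrightarrow> bnd h \<Longrightarrow> q (\<lambda>x. g x + h x) \<le> q g + q h" unfolding S_def by blast
lemma S_scale: "q \<in> S \<Longrightarrow> bnd g \<Longrightarrow> c > 0 \<Longrightarrow> q (\<lambda>x. c * g x) \<le> c * q g" unfolding S_def by blast
lemma S_T: "q \<in> S \<Longrightarrow> bnd g \<Longrightarrow> t \<in> T g \<Longrightarrow> q g \<le> t" unfolding S_def by blast

lemma S_zero: assumes q: "q \<in> S" shows "q (\<lambda>_. 0) = 0"
proof -
  have "q (\<lambda>x. 2 * 0) \<le> 2 * q (\<lambda>_. 0)" by (rule S_scale[OF q bnd_const]) simp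
  moreover have "q (\<lambda>x. (1/2) * 0) \<le> (1/2) * q (\<lambda>_. 0)" by (rule S_scale[OF q bnd_const]) simp
  ultimately show ?thesis by simp
qed

lemma S_neg: assumes q: "q \<in> S" and g: "bnd g" shows "0 \<le> q g + q (\<lambda>x. - g x)"
proof -
  have "q (\<lambda>x. g x + - g x) \<le> q g + q (\<lambda>x. - g x)" by (rule S_add[OF q g bnd_minus[OF g]])
  thus ?thesis using S_zero[OF q] by simp
qed

lemma S_lower: assumes q: "q \<in> S" and b: "\<And>x. \<bar>g x\<bar> \<le> C" shows "- C \<le> q g"
proof -
  have g: "bnd g" unfolding bnd_def using b by blast
  have "q (\<lambda>x. - g x) \<le> C" by (rule S_T[OF q bnd_minus[OF g] T_upper]) (use b in simp)
  thus ?thesis using S_neg[OF q g] by linarith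
qed

lemma S_bnd_below: "bnd g \<Longrightarrow> \<exists>C. \<forall>q\<in>S. - C \<le> q g"
  unfolding bnd_def using S_lower by blast

definition q0 :: "('a \<Rightarrow> real) \<Rightarrow> real" where
  "q0 g = (if bnd g then Inf (T g) else 0)"

lemma q0_S: "q0 \<in> S"
  unfolding S_def
proof (intro CollectI conjI allI impI)
  fix g :: "'a \<Rightarrow> real" assume "\<not> bnd g" thus "q0 g = 0" by (simp add: q0_def)
next
  fix g h :: "'a \<Rightarrow> real" assume g: "bnd g" and h: "bnd h"
  have gh: "bnd (\<lambda>x. g x + h x)" by (rule bnd_add[OF g h])
  have "Inf (T (\<lambda>x. g x + h x)) \<le> Inf (T g) + Inf (T h)"
    by (rule inf_add_le[OF T_ne[OF g] T_ne[OF h]], rule cInf_lower[OF T_add T_bdd[OF gh]])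
  thus "q0 (\<lambda>x. g x + h x) \<le> q0 g + q0 h" using g h gh by (simp add: q0_def)
next
  fix g :: "'a \<Rightarrow> real" and c :: real assume g: "bnd g" and c: "c > 0"
  have cg: "bnd (\<lambda>x. c * g x)" by (rule bnd_scale[OF g])
  have "Inf (T (\<lambda>x. c * g x)) \<le> c * Inf (T g)"
    by (rule inf_scale_le[OF T_ne[OF g] c], rule cInf_lower[OF T_scale[OF c] T_bdd[OF cg]])
  thus "q0 (\<lambda>x. c * g x) \<le> c * q0 g" using g cg by (simp add: q0_def)
next
  fix g :: "'a \<Rightarrow> real" and t assume g: "bnd g" and t: "t \<in> T g"
  show "q0 g \<le> t" using cInf_lower[OF t T_bdd[OF g]] g by (simp add: q0_def)
qed

definition qinf :: "(('a \<Rightarrow> real) \<Rightarrow> real) set \<Rightarrow> ('a \<Rightarrow> real) \<Rightarrow> real" where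
  "qinf C g = (if bnd g then Inf ((\<lambda>q. q g) ` C) else 0)"

lemma qinf_bdd: "C \<subseteq> S \<Longrightarrow> bnd g \<Longrightarrow> bdd_below ((\<lambda>q. q g) ` C)"
  using S_bnd_below[of g] unfolding bdd_below_def by blast

lemma qinf_S:
  assumes CS: "C \<subseteq> S" and ne: "C \<noteq> {}"
    and ch: "\<And>q1 q2. q1 \<in> C \<Longrightarrow> q2 \<in> C \<Longrightarrow> (\<forall>g. bnd g \<longrightarrow> q1 g \<le> q2 g) \<or> (\<forall>g. bnd g \<longrightarrow> q2 g \<le> q1 g)"
  shows "qinf C \<in> S" and "\<And>q g. q \<in> C \<Longrightarrow> bnd g \<Longrightarrow> qinf C g \<le> q g"
proof -
  show le: "\<And>q g. q \<in> C \<Longrightarrow> bnd g \<Longrightarrow> qinf C g \<le> q g"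
    unfolding qinf_def using cInf_lower[OF _ qinf_bdd[OF CS]] by auto
  have ne': "(\<lambda>q. q g) ` C \<noteq> {}" for g using ne by auto
  show "qinf C \<in> S"
    unfolding S_def
  proof (intro CollectI conjI allI impI)
    fix g :: "'a \<Rightarrow> real" assume "\<not> bnd g" thus "qinf C g = 0" by (simp add: qinf_def)
  next
    fix g h :: "'a \<Rightarrow> real" assume g: "bnd g" and h: "bnd h"
    have gh: "bnd (\<lambda>x. g x + h x)" by (rule bnd_add[OF g h])
    have "Inf ((\<lambda>q. q (\<lambda>x. g x + h x)) ` C) \<le> Inf ((\<lambda>q. q g) ` C) + Inf ((\<lambda>q. q h) ` C)"
    proof (rule inf_add_le[OF ne' ne'])
      fix a b assume "a \<in> (\<lambda>q. q g) ` C" "b \<in> (\<lambda>q. q h) ` C"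
      then obtain q1 q2 where q: "q1 \<in> C" "q2 \<in> C" "a = q1 g" "b = q2 h" by blast
      have i1: "Inf ((\<lambda>q. q (\<lambda>x. g x + h x)) ` C) \<le> q1 (\<lambda>x. g x + h x)"
        using le[OF q(1) gh] gh by (simp add: qinf_def)
      have i2: "Inf ((\<lambda>q. q (\<lambda>x. g x + h x)) ` C) \<le> q2 (\<lambda>x. g x + h x)"
        using le[OF q(2) gh] gh by (simp add: qinf_def)
      have s1: "q1 (\<lambda>x. g x + h x) \<le> q1 g + q1 h" by (rule S_add[OF _ g h]) (use q CS in auto)
      have s2: "q2 (\<lambda>x. g x + h x) \<le> q2 g + q2 h" by (rule S_add[OF _ g h]) (use q CS in auto)
      show "Inf ((\<lambda>q. q (\<lambda>x. g x + h x)) ` C) \<le> a + b"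
        using ch[OF q(1) q(2)] i1 i2 s1 s2 g h q(3,4) by force
    qed
    thus "qinf C (\<lambda>x. g x + h x) \<le> qinf C g + qinf C h" using g h gh by (simp add: qinf_def)
  next
    fix g :: "'a \<Rightarrow> real" and c :: real assume g: "bnd g" and c: "c > 0"
    have cg: "bnd (\<lambda>x. c * g x)" by (rule bnd_scale[OF g])
    have "Inf ((\<lambda>q. q (\<lambda>x. c * g x)) ` C) \<le> c * Inf ((\<lambda>q. q g) ` C)"
    proof (rule inf_scale_le[OF ne' c])
      fix a assume "a \<in> (\<lambda>q. q g) ` C"
      then obtain q where q: "q \<in> C" "a = q g" by blast
      have "Inf ((\<lambda>q. q (\<lambda>x. c * g x)) ` C) \<le> q (\<lambda>x. c * g x)"
        using le[OF q(1) cg] cg by (simp add: qinf_def)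
      also have "\<dots> \<le> c * q g" by (rule S_scale[OF _ g c]) (use q CS in auto)
      finally show "Inf ((\<lambda>q. q (\<lambda>x. c * g x)) ` C) \<le> c * a" using q by simp
    qed
    thus "qinf C (\<lambda>x. c * g x) \<le> c * qinf C g" using g cg by (simp add: qinf_def)
  next
    fix g :: "'a \<Rightarrow> real" and t assume g: "bnd g" and t: "t \<in> T g"
    obtain q where q: "q \<in> C" using ne by blast
    show "qinf C g \<le> t" using le[OF q g] S_T[OF _ g t, of q] q CS by force
  qed
qed

lemma exists_minimal: "\<exists>q\<in>S. \<forall>q'\<in>S. (\<forall>g. bnd g \<longrightarrow> q' g \<le> q g) \<longrightarrow> q' = q"
proof -
  define P where "P = (\<lambda>q1 q2 :: ('a \<Rightarrow> real) \<Rightarrow> real. \<forall>g. bnd g \<longrightarrow> q2 g \<le> q1 g)"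
  have po: "partial_order_on S (relation_of P S)"
  proof (rule partial_order_on_relation_ofI)
    fix a assume "a \<in> S" thus "P a a" by (simp add: P_def)
  next
    fix a b c assume "P a b" "P b c" thus "P a c" unfolding P_def by (meson order_trans)
  next
    fix a b assume ab: "a \<in> S" "b \<in> S" "P a b" "P b a"
    show "a = b"
    proof
      fix g show "a g = b g"
      proof (cases "bnd g")
        case True thus ?thesis using ab(3,4) unfolding P_def by (meson antisym)
      next
        case False thus ?thesis using S_off ab(1,2) by metis
      qed
    qed
  qed
  have "\<exists>m\<in>S. \<forall>a\<in>S. P m a \<longrightarrow> a = m"
  proof (rule predicate_Zorn[OF po])
    fix C assume C: "C \<in> Chains (relation_of P S)"
    have CS: "C \<subseteq> S" using C unfolding Chains_def relation_of_def by auto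
    have ch: "\<And>q1 q2. q1 \<in> C \<Longrightarrow> q2 \<in> C \<Longrightarrow> (\<forall>g. bnd g \<longrightarrow> q1 g \<le> q2 g) \<or> (\<forall>g. bnd g \<longrightarrow> q2 g \<le> q1 g)"
      using C unfolding Chains_def relation_of_def P_def by blast
    show "\<exists>u\<in>S. \<forall>a\<in>C. P a u"
    proof (cases "C = {}")
      case True thus ?thesis using q0_S by blast
    next
      case False
      show ?thesis using qinf_S[OF CS False ch] unfolding P_def by blast
    qed
  qed
  thus ?thesis unfolding P_def by blast
qed

lemma minimal_neg:
  assumes q: "q \<in> S" and mn: "\<forall>q'\<in>S. (\<forall>g. bnd g \<longrightarrow> q' g \<le> q g) \<longrightarrow> q' = q"
    and y: "bnd y"
  shows "q (\<lambda>x. - y x) = - q y"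
proof -
  define E where "E x = (\<lambda>t. q (\<lambda>z. x z + t * y z) - t * q y) ` {0..}" for x
  define qy where "qy x = (if bnd x then Inf (E x) else 0)" for x
  have Ene: "E x \<noteq> {}" for x unfolding E_def by auto
  have qty: "t * q y \<le> q (\<lambda>z. t * y z)" if t: "t \<ge> 0" for t
  proof (cases "t = 0")
    case True thus ?thesis using S_zero[OF q] by simp
  next
    case False
    hence tp: "t > 0" using t by simp
    have "q (\<lambda>z. (1/t) * (t * y z)) \<le> (1/t) * q (\<lambda>z. t * y z)"
      by (rule S_scale[OF q bnd_scale[OF y]]) (use tp in simp)
    hence "q y \<le> (1/t) * q (\<lambda>z. t * y z)" using tp by simp
    thus ?thesis using tp by (simp add: field_simps)
  qed
  have Elow: "- q (\<lambda>z. - x z) \<le> e" if x: "bnd x" and e: "e \<in> E x" for x e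
  proof -
    obtain t where t: "t \<ge> 0" "e = q (\<lambda>z. x z + t * y z) - t * q y" using e unfolding E_def by auto
    have xt: "bnd (\<lambda>z. x z + t * y z)" by (rule bnd_add[OF x bnd_scale[OF y]])
    have "q (\<lambda>z. (x z + t * y z) + - x z) \<le> q (\<lambda>z. x z + t * y z) + q (\<lambda>z. - x z)"
      by (rule S_add[OF q xt bnd_minus[OF x]])
    hence "q (\<lambda>z. t * y z) \<le> q (\<lambda>z. x z + t * y z) + q (\<lambda>z. - x z)" by simp
    thus ?thesis using qty[OF t(1)] t(2) by linarith
  qed
  have Ebdd: "bnd x \<Longrightarrow> bdd_below (E x)" for x unfolding bdd_below_def using Elow by blast
  have Elow2: "bnd x \<Longrightarrow> t \<ge> 0 \<Longrightarrow> qy x \<le> q (\<lambda>z. x z + t * y z) - t * q y" for x t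
    unfolding qy_def using cInf_lower[OF _ Ebdd, of _ x] by (auto simp: E_def)
  have qy_le: "qy x \<le> q x" if x: "bnd x" for x
    using Elow2[OF x, of 0] by simp
  have qyS: "qy \<in> S"
    unfolding S_def
  proof (intro CollectI conjI allI impI)
    fix g :: "'a \<Rightarrow> real" assume "\<not> bnd g" thus "qy g = 0" by (simp add: qy_def)
  next
    fix g h :: "'a \<Rightarrow> real" assume g: "bnd g" and h: "bnd h"
    have gh: "bnd (\<lambda>x. g x + h x)" by (rule bnd_add[OF g h])
    have "qy (\<lambda>x. g x + h x) \<le> Inf (E g) + Inf (E h)"
    proof (rule inf_add_le[OF Ene Ene])
      fix a b assume "a \<in> E g" "b \<in> E h"
      then obtain t1 t2 where t: "t1 \<ge> 0" "t2 \<ge> 0" "a = q (\<lambda>z. g z + t1 * y z) - t1 * q y"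
        "b = q (\<lambda>z. h z + t2 * y z) - t2 * q y" unfolding E_def by auto
      have "qy (\<lambda>x. g x + h x) \<le> q (\<lambda>z. (g z + h z) + (t1 + t2) * y z) - (t1 + t2) * q y"
        using Elow2[OF gh, of "t1 + t2"] t by simp
      also have "q (\<lambda>z. (g z + h z) + (t1 + t2) * y z) = q (\<lambda>z. (g z + t1 * y z) + (h z + t2 * y z))"
        by (rule arg_cong[where f=q]) (auto simp: algebra_simps)
      also have "\<dots> \<le> q (\<lambda>z. g z + t1 * y z) + q (\<lambda>z. h z + t2 * y z)"
        by (rule S_add[OF q]; rule bnd_add; (rule g | rule h | rule bnd_scale[OF y]))
      finally show "qy (\<lambda>x. g x + h x) \<le> a + b" using t by (simp add: algebra_simps)
    qed
    thus "qy (\<lambda>x. g x + h x) \<le> qy g + qy h" using g h by (simp add: qy_def)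
  next
    fix g :: "'a \<Rightarrow> real" and c :: real assume g: "bnd g" and c: "c > 0"
    have cg: "bnd (\<lambda>x. c * g x)" by (rule bnd_scale[OF g])
    have "qy (\<lambda>x. c * g x) \<le> c * Inf (E g)"
    proof (rule inf_scale_le[OF Ene c])
      fix a assume "a \<in> E g"
      then obtain t where t: "t \<ge> 0" "a = q (\<lambda>z. g z + t * y z) - t * q y" unfolding E_def by auto
      have "qy (\<lambda>x. c * g x) \<le> q (\<lambda>z. c * g z + (c * t) * y z) - (c * t) * q y"
        using Elow2[OF cg, of "c * t"] t c by simp
      also have "q (\<lambda>z. c * g z + (c * t) * y z) = q (\<lambda>z. c * (g z + t * y z))"
        by (rule arg_cong[where f=q]) (auto simp: algebra_simps)
      also have "\<dots> \<le> c * q (\<lambda>z. g z + t * y z)"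
        by (rule S_scale[OF q bnd_add[OF g bnd_scale[OF y]] c])
      finally have h: "qy (\<lambda>x. c * g x) \<le> c * q (\<lambda>z. g z + t * y z) - (c * t) * q y" by simp
      moreover have "c * a = c * q (\<lambda>z. g z + t * y z) - (c * t) * q y" unfolding t(2) by (simp add: algebra_simps)
      ultimately show "qy (\<lambda>x. c * g x) \<le> c * a" by linarith
    qed
    thus "qy (\<lambda>x. c * g x) \<le> c * qy g" using g cg by (simp add: qy_def)
  next
    fix g :: "'a \<Rightarrow> real" and t assume g: "bnd g" and t: "t \<in> T g"
    show "qy g \<le> t" using qy_le[OF g] S_T[OF q g t] by linarith
  qed
  have "qy = q" using mn qyS qy_le by blast
  hence "q (\<lambda>x. - y x) \<le> q (\<lambda>z. - y z + 1 * y z) - 1 * q y"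
    using Elow2[OF bnd_minus[OF y], of 1] by simp
  hence "q (\<lambda>x. - y x) \<le> - q y" using S_zero[OF q] by simp
  moreover have "0 \<le> q y + q (\<lambda>x. - y x)" by (rule S_neg[OF q y])
  ultimately show ?thesis by linarith
qed

end


lemma bnd_sum: "finite Y \<Longrightarrow> (\<forall>y\<in>Y. bnd (F y)) \<Longrightarrow> bnd (\<lambda>x. \<Sum>y\<in>Y. F y x)"
proof (induction Y rule: finite_induct)
  case empty thus ?case using bnd_const[of 0] by simp
next
  case (insert a Y)
  thus ?case using bnd_add[of "F a" "\<lambda>x. \<Sum>y\<in>Y. F y x"] by simp
qed

lemma arch_inv: "e > 0 \<Longrightarrow> \<exists>M::nat. \<forall>n\<ge>M. 1 / (real n + 1) < e"
proof -
  assume e: "e > 0"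
  obtain M :: nat where M: "1 / e < real M" using reals_Archimedean2 by blast
  have "1 / (real M + 1) < e" using M e by (simp add: field_simps)
  moreover have "1 / (real n + 1) \<le> 1 / (real M + 1)" if "n \<ge> M" for n
    using that by (simp add: frac_le)
  ultimately show ?thesis by (meson le_less_trans)
qed

lemma inv_seq_0: "(\<lambda>n. 1 / (real n + 1)) \<longlonglongrightarrow> 0"
  using LIMSEQ_inverse_real_of_nat by (simp add: inverse_eq_divide add.commute)

context HB
begin

lemma exists_phi: "\<exists>\<phi>. (\<forall>g h. bnd g \<longrightarrow> bnd h \<longrightarrow> \<phi> (\<lambda>x. g x + h x) = \<phi> g + \<phi> h) \<and>
   (\<forall>g c. bnd g \<longrightarrow> \<phi> (\<lambda>x. c * g x) = c * \<phi> g) \<and> (\<forall>g t. bnd g \<longrightarrow> t \<in> T g \<longrightarrow> \<phi> g \<le> t)"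
proof -
  obtain q where q: "q \<in> S" and mn: "\<forall>q'\<in>S. (\<forall>g. bnd g \<longrightarrow> q' g \<le> q g) \<longrightarrow> q' = q"
    using exists_minimal by blast
  have neg: "bnd y \<Longrightarrow> q (\<lambda>x. - y x) = - q y" for y using minimal_neg[OF q mn] by blast
  have add: "q (\<lambda>x. g x + h x) = q g + q h" if g: "bnd g" and h: "bnd h" for g h
  proof -
    have "q (\<lambda>x. - g x + - h x) \<le> q (\<lambda>x. - g x) + q (\<lambda>x. - h x)"
      by (rule S_add[OF q bnd_minus[OF g] bnd_minus[OF h]])
    moreover have "q (\<lambda>x. - g x + - h x) = - q (\<lambda>x. g x + h x)"
      using neg[OF bnd_add[OF g h]] by (simp add: algebra_simps)
    ultimately show ?thesis using S_add[OF q g h] neg[OF g] neg[OF h] by linarith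
  qed
  have scale: "q (\<lambda>x. c * g x) = c * q g" if g: "bnd g" for g c
  proof -
    have pos: "q (\<lambda>x. c * g x) = c * q g" if c: "c > 0" for c
    proof -
      have "q (\<lambda>x. (1/c) * (c * g x)) \<le> (1/c) * q (\<lambda>x. c * g x)"
        by (rule S_scale[OF q bnd_scale[OF g]]) (use c in simp)
      hence "q g \<le> (1/c) * q (\<lambda>x. c * g x)" using c by simp
      hence "c * q g \<le> q (\<lambda>x. c * g x)" using c by (simp add: field_simps)
      thus ?thesis using S_scale[OF q g c] by linarith
    qed
    show ?thesis
    proof (cases "c > 0")
      case True thus ?thesis using pos by blast
    next
      case False
      show ?thesis
      proof (cases "c = 0")
        case True thus ?thesis using S_zero[OF q] by simp
      next
        case False
        hence c: "- c > 0" using \<open>\<not> c > 0\<close> by simp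
        have "q (\<lambda>x. c * g x) = q (\<lambda>x. - ((- c) * g x))" by simp
        also have "\<dots> = - q (\<lambda>x. (- c) * g x)" by (rule neg[OF bnd_scale[OF g]])
        also have "\<dots> = c * q g" using pos[OF c] by simp
        finally show ?thesis .
      qed
    qed
  qed
  show ?thesis using add scale S_T[OF q] by blast
qed

definition phi :: "('a \<Rightarrow> real) \<Rightarrow> real" where
  "phi = (SOME \<phi>. (\<forall>g h. bnd g \<longrightarrow> bnd h \<longrightarrow> \<phi> (\<lambda>x. g x + h x) = \<phi> g + \<phi> h) \<and>
   (\<forall>g c. bnd g \<longrightarrow> \<phi> (\<lambda>x. c * g x) = c * \<phi> g) \<and> (\<forall>g t. bnd g \<longrightarrow> t \<in> T g \<longrightarrow> \<phi> g \<le> t))"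

lemma phi_props: "(\<forall>g h. bnd g \<longrightarrow> bnd h \<longrightarrow> phi (\<lambda>x. g x + h x) = phi g + phi h) \<and>
   (\<forall>g c. bnd g \<longrightarrow> phi (\<lambda>x. c * g x) = c * phi g) \<and> (\<forall>g t. bnd g \<longrightarrow> t \<in> T g \<longrightarrow> phi g \<le> t)"
  unfolding phi_def by (rule someI_ex[OF exists_phi])

lemma phi_add: "bnd g \<Longrightarrow> bnd h \<Longrightarrow> phi (\<lambda>x. g x + h x) = phi g + phi h"
  using phi_props by blast
lemma phi_scale: "bnd g \<Longrightarrow> phi (\<lambda>x. c * g x) = c * phi g"
  using phi_props by blast
lemma phi_T: "bnd g \<Longrightarrow> t \<in> T g \<Longrightarrow> phi g \<le> t"
  using phi_props by blast

lemma phi_zero: "phi (\<lambda>_. 0) = 0"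
  using phi_scale[OF bnd_const, of 0 0] by simp

lemma phi_diff: "bnd g \<Longrightarrow> bnd h \<Longrightarrow> phi (\<lambda>x. g x - h x) = phi g - phi h"
  using phi_add[of g "\<lambda>x. (-1) * h x"] phi_scale[of h "-1"] bnd_scale[of h "-1"] by simp

lemma T_witness: "f \<in> G \<Longrightarrow> R (\<lambda>x. f x - g x) (\<lambda>_. 0) \<Longrightarrow> 0 \<in> T g"
  unfolding T_def by (intro CollectI bexI) simp_all

lemma phi_nonneg: assumes g: "bnd g" and nn: "\<And>x. g x \<ge> 0" shows "phi g \<ge> 0"
proof -
  have "R (\<lambda>x. 0 - - g x) (\<lambda>_. 0)" by (rule R_cert[OF rso]) (use nn in simp)
  hence "0 \<in> T (\<lambda>x. - g x)" by (rule T_witness[OF zeroG])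
  hence "phi (\<lambda>x. - g x) \<le> 0" by (rule phi_T[OF bnd_minus[OF g]])
  thus ?thesis using phi_scale[OF g, of "-1"] by simp
qed

lemma phi_mono: "bnd g \<Longrightarrow> bnd h \<Longrightarrow> (\<And>x. g x \<le> h x) \<Longrightarrow> phi g \<le> phi h"
  using phi_nonneg[of "\<lambda>x. h x - g x"] phi_diff[of h g] bnd_diff[of h g] by simp

lemma phi_const: "phi (\<lambda>_. c) = c"
proof -
  have "phi (\<lambda>_. 1) \<le> 1" by (rule phi_T[OF bnd_const T_upper]) simp
  moreover have "- 1 \<in> T (\<lambda>_. - 1)"
    unfolding T_def by (intro CollectI bexI[OF _ zeroG] R_cert[OF rso]) simp
  hence "phi (\<lambda>_. - 1) \<le> - 1" by (rule phi_T[OF bnd_const])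
  hence "- phi (\<lambda>_. 1) \<le> - 1" using phi_scale[OF bnd_const, of "-1" 1] by simp
  ultimately have "phi (\<lambda>_. 1) = 1" by linarith
  thus ?thesis using phi_scale[OF bnd_const, of c 1] by simp
qed

definition mm :: "'a set \<Rightarrow> real" where "mm A = phi (indicator A)"

lemma mm_fa: "fa_prob mm"
  unfolding fa_prob_def mm_def
proof (intro conjI allI impI)
  show "phi (indicator UNIV) = 1" using phi_const[of 1] by (simp add: indicator_def)
  show "phi (indicator A) \<ge> 0" for A by (rule phi_nonneg[OF bnd_ind]) (simp add: indicator_def)
  fix A B :: "'a set" assume d: "A \<inter> B = {}"
  have "indicator (A \<union> B) = (\<lambda>x. indicator A x + indicator B x :: real)"
  proof
    fix x show "indicator (A \<union> B) x = indicator A x + (indicator B x :: real)"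
      using d by (auto simp: indicator_def)
  qed
  thus "phi (indicator (A \<union> B)) = phi (indicator A) + phi (indicator B)"
    using phi_add[OF bnd_ind bnd_ind] by simp
qed

lemma phi_sum: "finite Y \<Longrightarrow> (\<And>y. y \<in> Y \<Longrightarrow> bnd (F y)) \<Longrightarrow>
   phi (\<lambda>x. \<Sum>y\<in>Y. F y x) = (\<Sum>y\<in>Y. phi (F y))"
proof (induction Y rule: finite_induct)
  case empty thus ?case using phi_zero by simp
next
  case (insert a Y)
  have b: "bnd (\<lambda>x. \<Sum>y\<in>Y. F y x)"
    by (rule bnd_sum[OF insert.hyps(1)]) (use insert.prems in auto)
  have "phi (\<lambda>x. \<Sum>y\<in>insert a Y. F y x) = phi (\<lambda>x. F a x + (\<Sum>y\<in>Y. F y x))"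
    using insert.hyps by simp
  also have "\<dots> = phi (F a) + phi (\<lambda>x. \<Sum>y\<in>Y. F y x)"
    using phi_add[OF _ b, of "F a"] insert.prems by simp
  finally show ?case using insert by simp
qed

lemma simple_phi: assumes f: "finite (range s)" shows "simple_int mm s = phi s"
proof -
  have "s = (\<lambda>x. \<Sum>y\<in>range s. y * indicator (s -` {y}) x)"
  proof
    fix x
    have "(\<Sum>y\<in>range s. y * indicator (s -` {y}) x) = (\<Sum>y\<in>range s. if y = s x then y else 0)"
      by (rule sum.cong) (auto simp: indicator_def)
    also have "\<dots> = s x" using f by simp
    finally show "s x = (\<Sum>y\<in>range s. y * indicator (s -` {y}) x)" by simp
  qed
  hence "phi s = (\<Sum>y\<in>range s. phi (\<lambda>x. y * indicator (s -` {y}) x))"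
    using phi_sum[OF f, of "\<lambda>y x. y * indicator (s -` {y}) x"] bnd_scale[OF bnd_ind] by metis
  also have "\<dots> = (\<Sum>y\<in>range s. y * mm (s -` {y}))"
    by (rule sum.cong) (auto simp: mm_def phi_scale[OF bnd_ind])
  also have "\<dots> = simple_int mm s" unfolding simple_int_def ..
  finally show ?thesis by simp
qed

lemma bounded_phi: assumes g: "\<And>x. \<bar>g x\<bar> \<le> C" shows "ds_has_integral mm g (phi g)"
proof -
  obtain s where sf: "\<And>n. finite (range (s n))" and sa: "\<And>n x. \<bar>s n x - g x\<bar> \<le> 1 / (real n + 1)"
    using approx_exists[of g C] g by blast
  have bg: "bnd g" unfolding bnd_def using g by blast
  have "(\<lambda>n. simple_int mm (s n)) \<longlonglongrightarrow> phi g"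
  proof -
    have d: "\<bar>phi (s n) - phi g\<bar> \<le> 1 / (real n + 1)" for n
    proof -
      have sa': "- (1 / (real n + 1)) \<le> s n x - g x \<and> s n x - g x \<le> 1 / (real n + 1)" for x
        using sa[of n x] by (simp add: abs_le_iff)
      have "phi (s n) - phi g = phi (\<lambda>x. s n x - g x)" using phi_diff[OF bnd_simple[OF sf] bg] by simp
      moreover have "phi (\<lambda>x. s n x - g x) \<le> phi (\<lambda>_. 1 / (real n + 1))"
        by (rule phi_mono[OF bnd_diff[OF bnd_simple[OF sf] bg] bnd_const]) (use sa' in blast)
      moreover have "phi (\<lambda>_. - (1 / (real n + 1))) \<le> phi (\<lambda>x. s n x - g x)"
        by (rule phi_mono[OF bnd_const bnd_diff[OF bnd_simple[OF sf] bg]]) (use sa' in blast)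
      ultimately show ?thesis using phi_const by (simp add: abs_le_iff)
    qed
    have "(\<lambda>n. phi (s n) - phi g) \<longlonglongrightarrow> 0"
    proof (rule tendsto_sandwich[of "\<lambda>n. - (1 / (real n + 1))" _ _ "\<lambda>n. 1 / (real n + 1)"])
      show "\<forall>\<^sub>F n in sequentially. - (1 / (real n + 1)) \<le> phi (s n) - phi g" 
      proof (intro always_eventually allI)
        fix n show "- (1 / (real n + 1)) \<le> phi (s n) - phi g" using d[of n] by (simp add: abs_le_iff)
      qed
      show "\<forall>\<^sub>F n in sequentially. phi (s n) - phi g \<le> 1 / (real n + 1)" using d abs_le_D1
        by (intro always_eventually) blast
      show "(\<lambda>n. - (1 / (real n + 1))) \<longlonglongrightarrow> 0" using tendsto_minus[OF inv_seq_0] by simp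
      show "(\<lambda>n. 1 / (real n + 1)) \<longlonglongrightarrow> 0" by (rule inv_seq_0)
    qed
    hence "(\<lambda>n. phi (s n)) \<longlonglongrightarrow> phi g" by (simp add: LIM_zero_iff)
    thus ?thesis using simple_phi[OF sf] by simp
  qed
  moreover have "ds_has_integral mm g (lim (\<lambda>n. simple_int mm (s n)))"
    by (rule approx_integral(2)[OF mm_fa sf sa])
  ultimately show ?thesis by (simp add: limI)
qed

lemma bounded_phi_int: "(\<And>x. \<bar>g x\<bar> \<le> C) \<Longrightarrow> ds_integral mm g = phi g"
  by (rule ds_integral_unique[OF mm_fa bounded_phi])

end


context HB
begin

lemma phi_close:
  assumes g: "bnd g" and h: "bnd h" and c: "\<And>x. \<bar>g x - h x\<bar> \<le> e"
  shows "\<bar>phi g - phi h\<bar> \<le> e"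
proof -
  have c': "- e \<le> g x - h x \<and> g x - h x \<le> e" for x using c[of x] by (simp add: abs_le_iff)
  have "phi g - phi h = phi (\<lambda>x. g x - h x)" using phi_diff[OF g h] by simp
  moreover have "phi (\<lambda>x. g x - h x) \<le> phi (\<lambda>_. e)"
    by (rule phi_mono[OF bnd_diff[OF g h] bnd_const]) (use c' in blast)
  moreover have "phi (\<lambda>_. - e) \<le> phi (\<lambda>x. g x - h x)"
    by (rule phi_mono[OF bnd_const bnd_diff[OF g h]]) (use c' in blast)
  ultimately show ?thesis using phi_const by (simp add: abs_le_iff)
qed

lemma mm_null: "R (\<lambda>_. 0) (indicator N) \<Longrightarrow> mm N = 0"
proof -
  assume r: "R (\<lambda>_. 0) (indicator N)"
  have "R (\<lambda>x. 0 - indicator N x) (\<lambda>_. 0)" using R_sub0[OF rso, of "\<lambda>_. 0" "indicator N"] r by blast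
  hence "0 \<in> T (indicator N)" by (rule T_witness[OF zeroG])
  hence "mm N \<le> 0" unfolding mm_def by (rule phi_T[OF bnd_ind])
  moreover have "mm N \<ge> 0" using fa_nonneg[OF mm_fa] .
  ultimately show ?thesis by simp
qed

lemma gamma_int:
  assumes fG: "f \<in> G" and fa: "R f (\<lambda>_. a)"
  shows "ds_integrable mm f \<and> trunc_int mm f \<le> 0"
proof -
  define n0 where "n0 = nat \<lceil>\<bar>a\<bar>\<rceil> + 1"
  have n0a: "real n0 \<ge> \<bar>a\<bar> + 1" unfolding n0_def by (simp add: real_nat_ceiling_ge)
  define N where "N = {x. f x \<le> a - 1}"
  have mN: "mm N = 0"
    by (rule mm_null) (use R_null[OF rso, of f a 1] fa in \<open>simp add: N_def\<close>)
  define c where "c n = phi (trunc f n)" for n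
  have bT: "bnd (trunc f n)" for n by (rule bnd_trunc)
  have offN: "trunc f n x = min (f x) (real n)" if "x \<notin> N" "n \<ge> n0" for n x
  proof -
    have "f x > a - 1" using that(1) by (simp add: N_def)
    moreover have "real n \<ge> real n0" using that(2) by simp
    ultimately show ?thesis unfolding trunc_eq using n0a by (auto simp: max_def min_def)
  qed
  have Tb: "\<bar>trunc f n x\<bar> \<le> real n" for n x by (rule trunc_bound)
  have c_le0: "c n \<le> 0" if n: "n \<ge> n0" for n
  proof -
    have an: "a + real n \<ge> 0" using n n0a by linarith
    have r0: "R (\<lambda>x. f x - a) (\<lambda>_. 0)" using R_sub0[OF rso, of f "\<lambda>_. a"] fa by blast
    have r0': "R (\<lambda>x. a + real n) (\<lambda>_. 0)" by (rule R_cert[OF rso]) (use an in simp)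
    have "R (\<lambda>x. (f x - a) + (a + real n)) (\<lambda>x. 0 + 0)"
      using R_add[OF rso, of "\<lambda>x. f x - a" "\<lambda>_. 0" "\<lambda>x. a + real n" "\<lambda>_. 0"] r0 r0' by blast
    hence r1: "R (\<lambda>x. f x + real n) (\<lambda>_. 0)" by (rule R_cong[OF rso]) auto
    have r2: "R (\<lambda>x. (f x + real n) * indicator {x. f x < - real n} x) (\<lambda>_. 0)"
      using R_rest[OF rso, of "\<lambda>x. f x + real n" "{x. f x < - real n}"] r1 by blast
    have r3: "R (\<lambda>x. (f x - trunc f n x) * indicator {x. \<not> f x < - real n} x) (\<lambda>_. 0)"
      by (rule R_cert[OF rso]) (auto simp: indicator_def trunc_eq)
    have "R (\<lambda>x. (f x + real n) * indicator {x. f x < - real n} x + (f x - trunc f n x) * indicator {x. \<not> f x < - real n} x)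
            (\<lambda>x. 0 + 0)"
      using R_add[OF rso, of "\<lambda>x. (f x + real n) * indicator {x. f x < - real n} x" "\<lambda>_. 0"
          "\<lambda>x. (f x - trunc f n x) * indicator {x. \<not> f x < - real n} x" "\<lambda>_. 0"] r2 r3 by blast
    hence "R (\<lambda>x. f x - trunc f n x) (\<lambda>_. 0)"
      by (rule R_cong[OF rso]) (auto simp: indicator_def trunc_eq)
    hence "0 \<in> T (trunc f n)" by (rule T_witness[OF fG])
    thus ?thesis unfolding c_def by (rule phi_T[OF bT])
  qed
  have cdiff: "phi (\<lambda>x. \<bar>trunc f k x - trunc f n x\<bar>) \<le> c k - c n" if n: "n0 \<le> n" and k: "n \<le> k" for n k
  proof -
    have pw: "\<bar>trunc f k x - trunc f n x\<bar> \<le> (trunc f k x - trunc f n x) + (4 * real k) * indicator N x" for x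
    proof (cases "x \<in> N")
      case True
      have "real n \<le> real k" using k by simp
      thus ?thesis using True Tb[of k x] Tb[of n x] by (auto simp: indicator_def abs_le_iff)
    next
      case False
      thus ?thesis using offN[OF False n] offN[OF False, of k] n k by (auto simp: min_def)
    qed
    have "phi (\<lambda>x. \<bar>trunc f k x - trunc f n x\<bar>) \<le> phi (\<lambda>x. (trunc f k x - trunc f n x) + (4 * real k) * indicator N x)"
      by (rule phi_mono[OF bnd_abs[OF bnd_diff[OF bT bT]] bnd_add[OF bnd_diff[OF bT bT] bnd_scale[OF bnd_ind]] pw])
    also have "\<dots> = c k - c n"
      using phi_add[OF bnd_diff[OF bT bT] bnd_scale[OF bnd_ind]] phi_diff[OF bT bT] phi_scale[OF bnd_ind] mN
      by (simp add: c_def mm_def)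
    finally show ?thesis .
  qed
  have cmono: "c n \<le> c k" if "n0 \<le> n" "n \<le> k" for n k
    using cdiff[OF that] phi_nonneg[OF bnd_abs[OF bnd_diff[OF bT bT]], of k n] by simp
  have tail: "(real k - real n0) * mm {x. f x \<ge> real k} \<le> - c n0" if k: "n0 < k" for k
  proof -
    have pw: "(real k - real n0) * indicator {x. f x \<ge> real k} x \<le> (trunc f k x - trunc f n0 x) + (4 * real k) * indicator N x" for x
    proof (cases "x \<in> N")
      case True
      hence "f x \<le> a - 1" by (simp add: N_def)
      moreover have "real n0 < real k" using k by simp
      ultimately have "\<not> f x \<ge> real k" using n0a by linarith
      thus ?thesis using True Tb[of k x] Tb[of n0 x] \<open>real n0 < real k\<close> by (auto simp: indicator_def abs_le_iff)
    next
      case False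
      thus ?thesis using offN[OF False, of n0] offN[OF False, of k] k by (auto simp: min_def indicator_def)
    qed
    have "(real k - real n0) * mm {x. f x \<ge> real k} = phi (\<lambda>x. (real k - real n0) * indicator {x. f x \<ge> real k} x)"
      by (simp add: mm_def phi_scale[OF bnd_ind])
    also have "\<dots> \<le> phi (\<lambda>x. (trunc f k x - trunc f n0 x) + (4 * real k) * indicator N x)"
      by (rule phi_mono[OF bnd_scale[OF bnd_ind] bnd_add[OF bnd_diff[OF bT bT] bnd_scale[OF bnd_ind]] pw])
    also have "\<dots> = c k - c n0"
      using phi_add[OF bnd_diff[OF bT bT] bnd_scale[OF bnd_ind]] phi_diff[OF bT bT] phi_scale[OF bnd_ind] mN
      by (simp add: c_def mm_def)
    also have "\<dots> \<le> - c n0" using c_le0[of k] k by simp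
    finally show ?thesis .
  qed
  define cc where "cc n = c (n + n0)" for n
  have inc: "incseq cc" unfolding cc_def by (rule incseq_SucI) (rule cmono; simp)
  have bdd: "bdd_above (range cc)" unfolding cc_def using c_le0 by (intro bdd_aboveI[of _ 0]) auto
  have "cc \<longlonglongrightarrow> (SUP i. cc i)" by (rule LIMSEQ_incseq_SUP[OF bdd inc])
  then obtain L where ccL: "cc \<longlonglongrightarrow> L" by blast
  have cL: "c \<longlonglongrightarrow> L" using ccL unfolding cc_def by (rule LIMSEQ_offset)
  have L0: "L \<le> 0" by (rule LIMSEQ_le_const2[OF cL]) (use c_le0 in blast)
  have dsT: "ds_integral mm (trunc f n) = c n" for n
    unfolding c_def by (rule bounded_phi_int[OF trunc_bound])
  have eL: "(\<lambda>n. ereal (ds_integral mm (trunc f n))) \<longlonglongrightarrow> ereal L"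
    unfolding dsT by (rule tendsto_ereal[OF cL])
  have ex: "\<exists>L'. (\<lambda>n. ereal (ds_integral mm (trunc f n))) \<longlonglongrightarrow> L'" using eL by blast
  have "trunc_int mm f = lim (\<lambda>n. ereal (ds_integral mm (trunc f n)))"
    unfolding trunc_int_trunc using ex by (rule if_P)
  also have "\<dots> = ereal L" using eL by (rule limI)
  finally have tr: "trunc_int mm f \<le> 0" using L0 by (simp add: zero_ereal_def)
  have "\<forall>n. \<exists>s. (\<forall>k. finite (range (s k))) \<and> (\<forall>k x. \<bar>s k x - trunc f n x\<bar> \<le> 1 / (real k + 1))"
  proof
    fix n show "\<exists>s. (\<forall>k. finite (range (s k))) \<and> (\<forall>k x. \<bar>s k x - trunc f n x\<bar> \<le> 1 / (real k + 1))"
      using approx_exists[of "trunc f n" "real n"] trunc_bound[of f n] by blast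
  qed
  then obtain \<sigma> where \<sigma>: "\<And>n k. finite (range (\<sigma> n k))" "\<And>n k x. \<bar>\<sigma> n k x - trunc f n x\<bar> \<le> 1 / (real k + 1)"
    by metis
  define s where "s n = \<sigma> n n" for n
  have sf: "finite (range (s n))" for n unfolding s_def by (rule \<sigma>(1))
  have sa: "\<bar>s n x - trunc f n x\<bar> \<le> 1 / (real n + 1)" for n x unfolding s_def by (rule \<sigma>(2))
  have bs: "bnd (s n)" for n by (rule bnd_simple[OF sf])
  have sc: "\<bar>phi (s n) - c n\<bar> \<le> 1 / (real n + 1)" for n
    unfolding c_def by (rule phi_close[OF bs bT sa])
  have lim: "(\<lambda>n. simple_int mm (s n)) \<longlonglongrightarrow> L"
  proof -
    have "(\<lambda>n. phi (s n) - c n) \<longlonglongrightarrow> 0"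
    proof (rule tendsto_sandwich[of "\<lambda>n. - (1 / (real n + 1))" _ _ "\<lambda>n. 1 / (real n + 1)"])
      show "\<forall>\<^sub>F n in sequentially. - (1 / (real n + 1)) \<le> phi (s n) - c n"
      proof (intro always_eventually allI)
        fix n show "- (1 / (real n + 1)) \<le> phi (s n) - c n" using sc[of n] by (simp add: abs_le_iff)
      qed
      show "\<forall>\<^sub>F n in sequentially. phi (s n) - c n \<le> 1 / (real n + 1)"
      proof (intro always_eventually allI)
        fix n show "phi (s n) - c n \<le> 1 / (real n + 1)" using sc[of n] by (simp add: abs_le_iff)
      qed
      show "(\<lambda>n. - (1 / (real n + 1))) \<longlonglongrightarrow> 0" using tendsto_minus[OF inv_seq_0] by simp
      show "(\<lambda>n. 1 / (real n + 1)) \<longlonglongrightarrow> 0" by (rule inv_seq_0)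
    qed
    hence "(\<lambda>n. (phi (s n) - c n) + c n) \<longlonglongrightarrow> 0 + L" by (rule tendsto_add[OF _ cL])
    thus ?thesis using simple_phi[OF sf] by simp
  qed
  have cau: "\<exists>M. \<forall>n\<ge>M. \<forall>k\<ge>M. simple_int mm (\<lambda>x. \<bar>s n x - s k x\<bar>) < \<epsilon>" if e: "\<epsilon> > 0" for \<epsilon>
  proof -
    obtain M1 where M1: "\<forall>n\<ge>M1. \<forall>k\<ge>M1. norm (c n - c k) < \<epsilon>/3"
      using CauchyD[OF LIMSEQ_imp_Cauchy[OF cL], of "\<epsilon>/3"] e by auto
    obtain M2 where M2: "\<forall>n\<ge>M2. 1 / (real n + 1) < \<epsilon>/3" using arch_inv[of "\<epsilon>/3"] e by auto
    show ?thesis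
    proof (intro exI[of _ "max (max M1 M2) n0"] allI impI)
      fix n k assume n: "max (max M1 M2) n0 \<le> n" and k: "max (max M1 M2) n0 \<le> k"
      have fsk: "finite (range (\<lambda>x. \<bar>s n x - s k x\<bar>))" by (rule finite_range_comb[OF sf sf])
      have tt: "phi (\<lambda>x. \<bar>trunc f n x - trunc f k x\<bar>) \<le> \<bar>c n - c k\<bar>"
      proof (cases "n \<le> k")
        case True
        have "(\<lambda>x. \<bar>trunc f n x - trunc f k x\<bar>) = (\<lambda>x. \<bar>trunc f k x - trunc f n x\<bar>)" by (simp add: abs_minus_commute)
        thus ?thesis using cdiff[of n k] True n by simp
      next
        case False
        thus ?thesis using cdiff[of k n] k by simp
      qed
      have "simple_int mm (\<lambda>x. \<bar>s n x - s k x\<bar>) = phi (\<lambda>x. \<bar>s n x - s k x\<bar>)" by (rule simple_phi[OF fsk])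
      also have "\<dots> \<le> phi (\<lambda>x. \<bar>trunc f n x - trunc f k x\<bar> + (1 / (real n + 1) + 1 / (real k + 1)))"
      proof (rule phi_mono[OF bnd_simple[OF fsk] bnd_add[OF bnd_abs[OF bnd_diff[OF bT bT]] bnd_const]])
        fix x show "\<bar>s n x - s k x\<bar> \<le> \<bar>trunc f n x - trunc f k x\<bar> + (1 / (real n + 1) + 1 / (real k + 1))"
          using sa[of n x] sa[of k x] by (simp add: abs_le_iff) linarith
      qed
      also have "\<dots> = phi (\<lambda>x. \<bar>trunc f n x - trunc f k x\<bar>) + (1 / (real n + 1) + 1 / (real k + 1))"
        using phi_add[OF bnd_abs[OF bnd_diff[OF bT bT]] bnd_const] phi_const by simp
      also have "\<dots> < \<epsilon>"
      proof -
        have "\<bar>c n - c k\<bar> < \<epsilon>/3" using M1 n k by auto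
        moreover have "1 / (real n + 1) < \<epsilon>/3" "1 / (real k + 1) < \<epsilon>/3" using M2 n k by auto
        ultimately show ?thesis using tt by linarith
      qed
      finally show "simple_int mm (\<lambda>x. \<bar>s n x - s k x\<bar>) < \<epsilon>" .
    qed
  qed
  have meas: "(\<lambda>n. mm {x. \<bar>s n x - f x\<bar> > \<epsilon>}) \<longlonglongrightarrow> 0" if e: "\<epsilon> > 0" for \<epsilon>
  proof (rule LIMSEQ_I)
    fix r :: real assume r: "0 < r"
    define D where "D = - c n0"
    have D0: "D \<ge> 0" using c_le0[of n0] by (simp add: D_def)
    obtain n1 where n1: "\<forall>n\<ge>n1. 1 / (real n + 1) < \<epsilon>" using arch_inv e by blast
    obtain n2 :: nat where n2: "D / r + real n0 + 1 < real n2" using reals_Archimedean2 by blast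
    show "\<exists>no. \<forall>n\<ge>no. norm (mm {x. \<bar>s n x - f x\<bar> > \<epsilon>} - 0) < r"
    proof (intro exI[of _ "max n1 n2"] allI impI)
      fix n assume n: "max n1 n2 \<le> n"
      have nn2: "real n2 \<le> real n" using n by simp
      have Dr: "D / r \<ge> 0" using D0 r by simp
      have nn0: "n0 < n" using n2 nn2 Dr by linarith
      have sub: "{x. \<bar>s n x - f x\<bar> > \<epsilon>} \<subseteq> {x. f x \<ge> real n} \<union> N"
      proof
        fix x assume x: "x \<in> {x. \<bar>s n x - f x\<bar> > \<epsilon>}"
        show "x \<in> {x. f x \<ge> real n} \<union> N"
        proof (rule ccontr)
          assume "x \<notin> {x. f x \<ge> real n} \<union> N"
          hence xN: "x \<notin> N" and fx: "f x < real n" by auto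
          have "trunc f n x = f x" using offN[OF xN, of n] nn0 fx by simp
          hence "\<bar>s n x - f x\<bar> \<le> 1 / (real n + 1)" using sa[of n x] by simp
          moreover have "1 / (real n + 1) < \<epsilon>" using n1 n by auto
          ultimately show False using x by simp
        qed
      qed
      have "mm {x. \<bar>s n x - f x\<bar> > \<epsilon>} \<le> mm {x. f x \<ge> real n} + mm N"
        using fa_mono[OF mm_fa sub] fa_subadd[OF mm_fa, of "{x. f x \<ge> real n}" N] by linarith
      also have "\<dots> = mm {x. f x \<ge> real n}" using mN by simp
      also have "\<dots> < r"
      proof -
        have pos: "real n - real n0 > 0" using nn0 by simp
        have "(real n - real n0) * mm {x. f x \<ge> real n} \<le> D" using tail[OF nn0] by (simp add: D_def)
        also have "D < r * (real n - real n0)"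
        proof -
          have "D / r < real n - real n0" using n2 nn2 by linarith
          thus ?thesis using r by (simp add: divide_less_eq mult.commute)
        qed
        finally have "mm {x. f x \<ge> real n} * (real n - real n0) < r * (real n - real n0)" by (simp add: mult.commute)
        thus ?thesis using pos by simp
      qed
      finally have "mm {x. \<bar>s n x - f x\<bar> > \<epsilon>} < r" .
      thus "norm (mm {x. \<bar>s n x - f x\<bar> > \<epsilon>} - 0) < r" using fa_nonneg[OF mm_fa] by simp
    qed
  qed
  have "ds_has_integral mm f L"
    unfolding ds_has_integral_def using sf meas cau lim by blast
  thus ?thesis using tr unfolding ds_integrable_def by blast
qed

end

theorem theorem8:
  fixes R :: "('a \<Rightarrow> real) \<Rightarrow> ('a \<Rightarrow> real) \<Rightarrow> bool"
    and \<Gamma> :: "('a \<Rightarrow> real) set"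
  assumes "regular_stochastic_order R"
    and "convex_cone_fun \<Gamma>"
  shows "(\<not> (\<exists>f\<in>\<Gamma>. R f (\<lambda>_. 1))) \<longleftrightarrow>
         (\<exists>m\<in>P_order R. Gamma_order R \<Gamma> \<subseteq> {f. ds_integrable m f} \<and>
            (SUP f\<in>Gamma_order R \<Gamma>. trunc_int m f) \<le> 0)"
proof
  assume no: "\<not> (\<exists>f\<in>\<Gamma>. R f (\<lambda>_. 1))"
  define G where "G = insert (\<lambda>_. 0) \<Gamma>"
  have cc: "\<And>f g a b. f \<in> \<Gamma> \<Longrightarrow> g \<in> \<Gamma> \<Longrightarrow> a \<ge> 0 \<Longrightarrow> b \<ge> 0 \<Longrightarrow> (\<lambda>x. a * f x + b * g x) \<in> \<Gamma>"
    using assms(2) unfolding convex_cone_fun_def by blast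
  interpret H: HB R G
  proof
    show "regular_stochastic_order R" by (rule assms(1))
    show "(\<lambda>_. 0) \<in> G" unfolding G_def by simp
  next
    fix f g :: "'a \<Rightarrow> real" and a b :: real
    assume f: "f \<in> G" and g: "g \<in> G" and a: "a \<ge> 0" and b: "b \<ge> 0"
    show "(\<lambda>x. a * f x + b * g x) \<in> G"
    proof (cases "f \<in> \<Gamma>")
      case fG: True
      show ?thesis
      proof (cases "g \<in> \<Gamma>")
        case True thus ?thesis using cc[OF fG True a b] unfolding G_def by simp
      next
        case False
        hence "g = (\<lambda>_. 0)" using g unfolding G_def by simp
        moreover have "(\<lambda>x. a * f x + 0 * f x) \<in> \<Gamma>" using cc[OF fG fG a, of 0] by simp
        ultimately show ?thesis unfolding G_def by simp
      qed
    next
      case False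
      hence f0: "f = (\<lambda>_. 0)" using f unfolding G_def by simp
      show ?thesis
      proof (cases "g \<in> \<Gamma>")
        case True
        have "(\<lambda>x. b * g x + 0 * g x) \<in> \<Gamma>" using cc[OF True True b, of 0] by simp
        thus ?thesis using f0 unfolding G_def by simp
      next
        case False
        hence "g = (\<lambda>_. 0)" using g unfolding G_def by simp
        thus ?thesis using f0 unfolding G_def by simp
      qed
    qed
  next
    fix f assume f: "f \<in> G"
    show "\<not> R f (\<lambda>_. 1)"
    proof (cases "f \<in> \<Gamma>")
      case True thus ?thesis using no by blast
    next
      case False
      hence "f = (\<lambda>_. 0)" using f unfolding G_def by simp
      thus ?thesis using R_triv[OF assms(1)] by simp
    qed
  qed
  have P: "H.mm \<in> P_order R"
    unfolding P_order_def using H.mm_fa H.mm_null by blast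
  have gi: "ds_integrable H.mm f \<and> trunc_int H.mm f \<le> 0" if fGo: "f \<in> Gamma_order R \<Gamma>" for f
  proof -
    obtain a where f: "f \<in> \<Gamma>" "R f (\<lambda>_. a)" using fGo unfolding Gamma_order_def by blast
    have "f \<in> G" using f(1) unfolding G_def by simp
    thus ?thesis by (rule H.gamma_int[OF _ f(2)])
  qed
  show "\<exists>m\<in>P_order R. Gamma_order R \<Gamma> \<subseteq> {f. ds_integrable m f} \<and>
            (SUP f\<in>Gamma_order R \<Gamma>. trunc_int m f) \<le> 0"
  proof (intro bexI[OF _ P] conjI)
    show "Gamma_order R \<Gamma> \<subseteq> {f. ds_integrable H.mm f}" using gi by blast
    show "(SUP f\<in>Gamma_order R \<Gamma>. trunc_int H.mm f) \<le> 0" using gi by (intro SUP_least) blast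
  qed
next
  assume "\<exists>m\<in>P_order R. Gamma_order R \<Gamma> \<subseteq> {f. ds_integrable m f} \<and>
            (SUP f\<in>Gamma_order R \<Gamma>. trunc_int m f) \<le> 0"
  then obtain m where m: "m \<in> P_order R" and sup: "(SUP f\<in>Gamma_order R \<Gamma>. trunc_int m f) \<le> 0" by blast
  show "\<not> (\<exists>f\<in>\<Gamma>. R f (\<lambda>_. 1))"
    using easy_direction[OF assms(1) m sup] by blast
qed

end
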